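(* Let $n,p,\ell$ be positive integers, $A\in\mathbb{R}^{n\times n}$, $C\in\mathbb{R}^{p\times n}$, $X_0,W\in\mathbb{R}^{n\times n}$ symmetric positive definite, $V=\operatorname{diag}(\sigma_{v,1}^2,\dots,\sigma_{v,p}^2)$ with all $\sigma_{v,i}>0$, $\mathcal{I}=\{1,\dots,p\}$, and let $s\le p$ be a positive integer. Let $f$, $\gamma$, $\alpha$, $\underline{\gamma}$, $\overline{\alpha}$ be as defined in the context, and consider the problem of maximizing $f(\mathcal{S})$ over $\mathcal{S}\subseteq\mathcal{I}$ subject to $|\mathcal{S}|\le s$. Let $\mathcal{S}^*$ be an optimal solution and $\mathcal{S}^{\mathrm{g}}$ the output of the greedy algorithm described in the context. Then $$f(\mathcal{S}^{\mathrm{g}})\ge\frac{1}{\alpha}\left(1-e^{-\alpha\gamma}\right)f(\mathcal{S}^* )\ge\frac{1}{\overline{\alpha}}\left(1-e^{-\overline{\alpha}\,\underline{\gamma}}\right)f(\mathcal{S}^* ).$$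
   Context: Let $\Phi\in\mathbb{R}^{n\ell\times n\ell}$ be the block lower-triangular matrix whose $(i,j)$ block ($i,j=1,\dots,\ell$) is $A^{i-j}$ for $i\ge j$ (with $A^0=I_n$) and $0$ for $i<j$. Let $Z=\operatorname{diag}(X_0,W,\dots,W)$ (block diagonal with $\ell$ blocks) and $L:=Z^{-1}$. For $\mathcal{S}=\{\theta_1<\dots<\theta_m\}\subseteq\mathcal{I}$, the selection matrix $S_{\mathcal{S}}\in\mathbb{R}^{m\times p}$ has $[S_{\mathcal{S}}]_{i,j}=1$ if $j=\theta_i$ and $0$ otherwise; set $G=\{I_\ell\otimes(S_{\mathcal{S}}C)\}\Phi$, $V_{\mathcal{S}}=I_\ell\otimes(S_{\mathcal{S}}VS_{\mathcal{S}}^\top)$, $U_{\mathcal{S}}:=G^\top V_{\mathcal{S}}^{-1}G$, with $U_\emptyset=0$. Define $J(\mathcal{S}):=\operatorname{tr}[(L+U_{\mathcal{S}})^{-1}]$ (the smoothing mean square error for $x_{k+1}=Ax_k+w_k$, $y_k=Cx_k+v_k$ over times $0,\dots,\ell-1$ using outputs indexed by $\mathcal{S}$) and $f(\mathcal{S}):=J(\emptyset)-J(\mathcal{S})$. Let $\underline{\gamma}:=\lambda_{\min}(L)/\lambda_{\max}(L+U_{\mathcal{I}})$ and $\overline{\alpha}:=1-\{\lambda_{\min}(L)\}^2/\{\lambda_{\max}(L+U_{\mathcal{I}})\}^2$. With $\rho_\Omega(\mathcal{S}):=f(\mathcal{S}\cup\Omega)-f(\mathcal{S})$, the submodularity ratio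 $\gamma$ of $f$ is the largest scalar with $\sum_{\omega\in\Omega\setminus\mathcal{S}}\rho_{\{\omega\}}(\mathcal{S})\ge\gamma\rho_\Omega(\mathcal{S})$ for all $\Omega,\mathcal{S}\subseteq\mathcal{I}$, and the curvature $\alpha$ of $f$ is the smallest scalar with $\rho_{\{j\}}(\mathcal{S}\setminus\{j\}\cup\Omega)\ge(1-\alpha)\rho_{\{j\}}(\mathcal{S}\setminus\{j\})$ for all $\Omega,\mathcal{S}\subseteq\mathcal{I}$, $j\in\mathcal{S}\setminus\Omega$. The greedy algorithm: set $\mathcal{S}_0=\emptyset$; for $i=1,\dots,s$ choose $\omega^*\in\arg\max_{\omega\in\mathcal{I}\setminus\mathcal{S}_{i-1}}[f(\mathcal{S}_{i-1}\cup\{\omega\})-f(\mathcal{S}_{i-1})]$ and set $\mathcal{S}_i=\mathcal{S}_{i-1}\cup\{\omega^*\}$; output $\mathcal{S}^{\mathrm{g}}=\mathcal{S}_s$. *)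

theory Defs
  imports "Jordan_Normal_Form.Gauss_Jordan_Elimination" "Jordan_Normal_Form.Char_Poly"
begin

definition mtrace :: "real mat \<Rightarrow> real" where
  "mtrace M = (\<Sum>i<dim_row M. M $$ (i, i))"

definition minv :: "real mat \<Rightarrow> real mat" where
  "minv M = the (mat_inverse M)"

definition sym_posdef :: "nat \<Rightarrow> real mat \<Rightarrow> bool" where
  "sym_posdef n M \<longleftrightarrow> M \<in> carrier_mat n n \<and> transpose_mat M = M \<and>
     (\<forall>x \<in> carrier_vec n. x \<noteq> 0\<^sub>v n \<longrightarrow> x \<bullet> (M *\<^sub>v x) > 0)"

definition lambda_min :: "real mat \<Rightarrow> real" where
  "lambda_min M = Min {k. eigenvalue M k}"

definition lambda_max :: "real mat \<Rightarrow> real" where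
  "lambda_max M = Max {k. eigenvalue M k}"

text \<open>Phi: (i,j) block is A^(i-j) for i >= j, 0 otherwise; l x l blocks of size n.\<close>
definition Phi_mat :: "nat \<Rightarrow> nat \<Rightarrow> real mat \<Rightarrow> real mat" where
  "Phi_mat n l A = mat (n*l) (n*l) (\<lambda>(r, c).
     if c div n \<le> r div n then (A ^\<^sub>m (r div n - c div n)) $$ (r mod n, c mod n) else 0)"

text \<open>Z = diag(X0, W, ..., W) with l blocks.\<close>
definition Z_mat :: "nat \<Rightarrow> nat \<Rightarrow> real mat \<Rightarrow> real mat \<Rightarrow> real mat" where
  "Z_mat n l X0 W = mat (n*l) (n*l) (\<lambda>(r, c).
     if r div n = c div n then (if r div n = 0 then X0 else W) $$ (r mod n, c mod n) else 0)"

text \<open>Kronecker product I_l \<otimes> M (block diagonal with l copies of M).\<close>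
definition kron_eye :: "nat \<Rightarrow> real mat \<Rightarrow> real mat" where
  "kron_eye l M = mat (l * dim_row M) (l * dim_col M) (\<lambda>(r, c).
     if r div dim_row M = c div dim_col M
     then M $$ (r mod dim_row M, c mod dim_col M) else 0)"

text \<open>Selection matrix: row i selects the i-th smallest element of S (indices 0-based).\<close>
definition sel_mat :: "nat \<Rightarrow> nat set \<Rightarrow> real mat" where
  "sel_mat p S = mat (card S) p (\<lambda>(i, j). if j = sorted_list_of_set S ! i then 1 else 0)"

definition V_mat :: "nat \<Rightarrow> (nat \<Rightarrow> real) \<Rightarrow> real mat" where
  "V_mat p sigma = mat p p (\<lambda>(i, j). if i = j then (sigma i)\<^sup>2 else 0)"

definition L_mat :: "nat \<Rightarrow> nat \<Rightarrow> real mat \<Rightarrow> real mat \<Rightarrow> real mat" where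
  "L_mat n l X0 W = minv (Z_mat n l X0 W)"

definition G_mat :: "nat \<Rightarrow> nat \<Rightarrow> nat \<Rightarrow> real mat \<Rightarrow> real mat \<Rightarrow> nat set \<Rightarrow> real mat" where
  "G_mat n p l A C S = kron_eye l (sel_mat p S * C) * Phi_mat n l A"

definition VS_mat :: "nat \<Rightarrow> nat \<Rightarrow> (nat \<Rightarrow> real) \<Rightarrow> nat set \<Rightarrow> real mat" where
  "VS_mat p l sigma S = kron_eye l (sel_mat p S * V_mat p sigma * transpose_mat (sel_mat p S))"

definition U_mat :: "nat \<Rightarrow> nat \<Rightarrow> nat \<Rightarrow> real mat \<Rightarrow> real mat \<Rightarrow> (nat \<Rightarrow> real) \<Rightarrow> nat set \<Rightarrow> real mat" where
  "U_mat n p l A C sigma S = (if S = {} then 0\<^sub>m (n*l) (n*l) else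
     transpose_mat (G_mat n p l A C S) * minv (VS_mat p l sigma S) * G_mat n p l A C S)"

definition J_fun :: "nat \<Rightarrow> nat \<Rightarrow> nat \<Rightarrow> real mat \<Rightarrow> real mat \<Rightarrow> real mat \<Rightarrow> real mat
    \<Rightarrow> (nat \<Rightarrow> real) \<Rightarrow> nat set \<Rightarrow> real" where
  "J_fun n p l A C X0 W sigma S = mtrace (minv (L_mat n l X0 W + U_mat n p l A C sigma S))"

definition f_fun :: "nat \<Rightarrow> nat \<Rightarrow> nat \<Rightarrow> real mat \<Rightarrow> real mat \<Rightarrow> real mat \<Rightarrow> real mat
    \<Rightarrow> (nat \<Rightarrow> real) \<Rightarrow> nat set \<Rightarrow> real" where
  "f_fun n p l A C X0 W sigma S = J_fun n p l A C X0 W sigma {} - J_fun n p l A C X0 W sigma S"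

definition gamma_lb :: "nat \<Rightarrow> nat \<Rightarrow> nat \<Rightarrow> real mat \<Rightarrow> real mat \<Rightarrow> real mat \<Rightarrow> real mat
    \<Rightarrow> (nat \<Rightarrow> real) \<Rightarrow> real" where
  "gamma_lb n p l A C X0 W sigma = lambda_min (L_mat n l X0 W)
     / lambda_max (L_mat n l X0 W + U_mat n p l A C sigma {..<p})"

definition alpha_ub :: "nat \<Rightarrow> nat \<Rightarrow> nat \<Rightarrow> real mat \<Rightarrow> real mat \<Rightarrow> real mat \<Rightarrow> real mat
    \<Rightarrow> (nat \<Rightarrow> real) \<Rightarrow> real" where
  "alpha_ub n p l A C X0 W sigma = 1 - (lambda_min (L_mat n l X0 W))\<^sup>2
     / (lambda_max (L_mat n l X0 W + U_mat n p l A C sigma {..<p}))\<^sup>2"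

definition marg :: "(nat set \<Rightarrow> real) \<Rightarrow> nat set \<Rightarrow> nat set \<Rightarrow> real" where
  "marg f Om S = f (S \<union> Om) - f S"

definition subm_ratio :: "(nat set \<Rightarrow> real) \<Rightarrow> nat set \<Rightarrow> real" where
  "subm_ratio f I = (GREATEST g. g \<in> {0..1} \<and>
     (\<forall>Om S. Om \<subseteq> I \<longrightarrow> S \<subseteq> I \<longrightarrow>
        (\<Sum>w\<in>Om - S. marg f {w} S) \<ge> g * marg f Om S))"

definition curvature :: "(nat set \<Rightarrow> real) \<Rightarrow> nat set \<Rightarrow> real" where
  "curvature f I = (LEAST a. a \<in> {0..1} \<and>
     (\<forall>Om S j. Om \<subseteq> I \<longrightarrow> S \<subseteq> I \<longrightarrow> j \<in> S - Om \<longrightarrow>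
        marg f {j} ((S - {j}) \<union> Om) \<ge> (1 - a) * marg f {j} (S - {j})))"

text \<open>Output Sg of the greedy algorithm (any tie-breaking) run for s steps.\<close>
definition greedy_output :: "(nat set \<Rightarrow> real) \<Rightarrow> nat set \<Rightarrow> nat \<Rightarrow> nat set \<Rightarrow> bool" where
  "greedy_output f I s Sg \<longleftrightarrow> (\<exists>Sq :: nat \<Rightarrow> nat set. Sq 0 = {} \<and>
     (\<forall>i<s. \<exists>w \<in> I - Sq i. Sq (Suc i) = insert w (Sq i) \<and>
        (\<forall>w' \<in> I - Sq i. f (insert w' (Sq i)) - f (Sq i) \<le> f (Sq (Suc i)) - f (Sq i))) \<and>
     Sg = Sq s)"

text \<open>(1/a)(1 - exp(-a g)), continuously extended by g at a = 0.\<close>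
definition bound_factor :: "real \<Rightarrow> real \<Rightarrow> real" where
  "bound_factor a g = (if a = 0 then g else (1 / a) * (1 - exp (- a * g)))"

end

theory Submission
  imports Defs "HOL-Analysis.Function_Topology" "HOL-Analysis.Convex"
begin

lemma bf_mono_g:
  assumes "0 \<le> a" "g1 \<le> g2"
  shows "bound_factor a g1 \<le> bound_factor a g2"
proof (cases "a = 0")
  case True then show ?thesis using assms by (simp add: bound_factor_def)
next
  case False
  then have a: "a > 0" using assms by auto
  have "exp (- a * g2) \<le> exp (- a * g1)" using a assms by (simp add: mult_left_mono)
  then show ?thesis using a by (simp add: bound_factor_def divide_right_mono)
qed

lemma exp_concave_aux:
  fixes y lam :: real
  assumes "0 \<le> lam" "lam \<le> 1"
  shows "exp (- (lam * y)) \<le> (1 - lam) + lam * exp (- y)"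
proof -
  have "exp ((1 - lam) * 0 + lam * (- y)) \<le> (1 - lam) * exp 0 + lam * exp (- y)"
    using convex_onD[OF exp_convex, of lam 0 "- y"] assms by simp
  then show ?thesis by simp
qed

lemma bf_anti_a:
  assumes "0 \<le> a1" "a1 \<le> a2" "0 \<le> g"
  shows "bound_factor a2 g \<le> bound_factor a1 g"
proof -
  consider "a2 = 0" | "a1 = 0" "a2 > 0" | "a1 > 0" using assms by linarith
  then show ?thesis
  proof cases
    case 1 then have "a1 = 0" using assms by auto
    with 1 show ?thesis by simp
  next
    case 2
    have "1 + (- a2 * g) \<le> exp (- a2 * g)" by (rule exp_ge_add_one_self)
    then have "1 - exp (- a2 * g) \<le> a2 * g" by simp
    then show ?thesis using 2 by (simp add: bound_factor_def field_simps)
  next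
    case 3
    define lam where "lam = a1 / a2"
    have a2: "a2 > 0" using 3 assms by auto
    have l0: "0 \<le> lam" "lam \<le> 1" using 3 assms a2 by (auto simp: lam_def)
    have "exp (- (lam * (a2 * g))) \<le> (1 - lam) + lam * exp (- (a2 * g))"
      by (rule exp_concave_aux[OF l0])
    moreover have "lam * (a2 * g) = a1 * g" using a2 by (simp add: lam_def)
    ultimately have "exp (- (a1 * g)) \<le> (1 - lam) + lam * exp (- (a2 * g))" by simp
    then have "lam * (1 - exp (- (a2 * g))) \<le> 1 - exp (- (a1 * g))" by (simp add: algebra_simps)
    then have "(a1 / a2) * (1 - exp (- (a2 * g))) \<le> 1 - exp (- (a1 * g))" by (simp add: lam_def)
    then have "(1 - exp (- (a2 * g))) / a2 \<le> (1 - exp (- (a1 * g))) / a1"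
      using 3 a2 by (simp add: field_simps)
    then show ?thesis using 3 a2 by (simp add: bound_factor_def)
  qed
qed

lemma step_plain:
  fixes Y al ga n K :: real
  assumes al: "0 \<le> al" "al \<le> 1" and ga: "0 \<le> ga" "ga \<le> 1" and K: "1 \<le> K"
    and n: "0 \<le> n" "n + 1 \<le> K"
    and Y: "0 \<le> Y" "Y \<le> n / K" "bound_factor al (ga * n / K) \<le> Y"
  defines "Y' \<equiv> Y * (1 - al * ga / K) + ga / K"
  shows "0 \<le> Y'" "Y' \<le> (n + 1) / K" "bound_factor al (ga * (n + 1) / K) \<le> Y'"
proof -
  have Kp: "K > 0" using K by auto
  have q: "0 \<le> 1 - al * ga / K" "1 - al * ga / K \<le> 1"
    using al ga K Kp by (auto simp: field_simps intro: order.trans[OF mult_le_one[of al ga]])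
  show "0 \<le> Y'" unfolding Y'_def using q Y Kp ga by auto
  have "Y * (1 - al * ga / K) \<le> n / K" using Y q by (meson mult_le_one order_trans mult_left_le)
  moreover have "ga / K \<le> 1 / K" using ga Kp by (simp add: divide_right_mono)
  ultimately show "Y' \<le> (n + 1) / K" unfolding Y'_def by (simp add: add_divide_distrib)
  show "bound_factor al (ga * (n + 1) / K) \<le> Y'"
  proof (cases "al = 0")
    case True
    then show ?thesis using Y unfolding Y'_def by (simp add: bound_factor_def add_divide_distrib distrib_left)
  next
    case False
    then have alp: "al > 0" using al by auto
    have h1: "1 - exp (- al * (ga * n / K)) \<le> al * Y"
      using Y(3) alp by (simp add: bound_factor_def field_simps)
    have e1: "1 + (- (al * ga / K)) \<le> exp (- (al * ga / K))" by (rule exp_ge_add_one_self)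
    have "- al * (ga * (n + 1) / K) = - al * (ga * n / K) + - (al * ga / K)"
      using Kp by (simp add: field_simps)
    then have "exp (- al * (ga * (n + 1) / K)) = exp (- al * (ga * n / K)) * exp (- (al * ga / K))"
      by (simp add: exp_add[symmetric])
    also have "\<dots> \<ge> exp (- al * (ga * n / K)) * (1 - al * ga / K)"
      using e1 by (intro mult_left_mono) auto
    finally have h2: "exp (- al * (ga * (n + 1) / K)) \<ge> exp (- al * (ga * n / K)) * (1 - al * ga / K)" .
    have "al * Y' = al * Y * (1 - al * ga / K) + al * ga / K" unfolding Y'_def by (simp add: algebra_simps)
    also have "\<dots> \<ge> (1 - exp (- al * (ga * n / K))) * (1 - al * ga / K) + al * ga / K"
      using h1 q by (intro add_right_mono mult_right_mono) auto
    finally have "al * Y' \<ge> 1 - exp (- al * (ga * n / K)) * (1 - al * ga / K)" by (simp add: algebra_simps)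
    then have "al * Y' \<ge> 1 - exp (- al * (ga * (n + 1) / K))" using h2 by linarith
    then show ?thesis using alp by (simp add: bound_factor_def field_simps)
  qed
qed

lemma key_exp_ineq:
  fixes al ga n k :: real
  assumes al: "0 \<le> al" "al \<le> 1" and ga: "0 \<le> ga" "ga \<le> 1"
    and n: "0 \<le> n" "n \<le> k"
  shows "exp (- (al * ga * n / k)) * (1 - ga / (k + 1)) + ga * (1 - al) / (k + 1)
         \<le> exp (- (al * ga * (n + 1) / (k + 1)))"
proof (cases "n = 0")
  case True
  have "1 + (- (al * ga / (k + 1))) \<le> exp (- (al * ga / (k + 1)))" by (rule exp_ge_add_one_self)
  moreover have "exp (- (al * ga * n / k)) * (1 - ga / (k + 1)) + ga * (1 - al) / (k + 1) = 1 - al * ga / (k + 1)"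
    using True n by (simp add: right_diff_distrib diff_divide_distrib)
  ultimately show ?thesis using True by simp
next
  case False
  then have np: "n > 0" using n by auto
  then have kp: "k > 0" using n by auto
  define a where "a = al * ga * n / k"
  define b where "b = al * ga * (n + 1) / (k + 1)"
  define c where "c = al * n / k"
  have ba: "b - a = al * ga * (k - n) / ((k + 1) * k)"
    unfolding a_def b_def using kp by (simp add: field_simps)
  have c0: "0 \<le> c" "c \<le> al" using al n kp by (auto simp: c_def field_simps intro: mult_left_mono)
  have ac: "a = ga * c" unfolding a_def c_def by simp
  have "a \<le> c" using ac c0 ga by (simp add: mult_left_le_one_le)
  then have "exp (- c) \<le> exp (- a)" by simp
  moreover have "1 - c \<le> exp (- c)" using exp_ge_add_one_self[of "- c"] by simp
  ultimately have "1 - c \<le> exp (- a)" by linarith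
  moreover have "0 \<le> 1 - al + c" using al c0 by auto
  ultimately have "(1 - c) * (1 - al + c) \<le> exp (- a) * (1 - al + c)"
    by (intro mult_right_mono) auto
  moreover have "1 - al \<le> (1 - c) * (1 - al + c)"
  proof -
    have "(1 - c) * (1 - al + c) = (1 - al) + c * (al - c)" by (simp add: algebra_simps)
    moreover have "0 \<le> c * (al - c)" using c0 by auto
    ultimately show ?thesis by linarith
  qed
  ultimately have main: "1 - al \<le> exp (- a) * (1 - al + c)" by linarith
  have kk: "ga / (k + 1) - (b - a) = ga / (k + 1) * (1 - al + c)"
  proof -
    have "al * ga * (k - n) / ((k + 1) * k) = ga / (k + 1) * (al * (k - n) / k)" by simp
    also have "al * (k - n) / k = al - al * n / k" using kp by (simp add: diff_divide_distrib right_diff_distrib)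
    finally show ?thesis unfolding ba c_def by (simp add: algebra_simps)
  qed
  have "ga * (1 - al) / (k + 1) = ga / (k + 1) * (1 - al)" by simp
  also have "\<dots> \<le> ga / (k + 1) * (exp (- a) * (1 - al + c))"
    using main ga kp by (intro mult_left_mono) auto
  also have "\<dots> = exp (- a) * (ga / (k + 1) - (b - a))" using kk by simp
  finally have h: "ga * (1 - al) / (k + 1) \<le> exp (- a) * (ga / (k + 1) - (b - a))" .
  have "exp (- b) = exp (- a) * exp (- (b - a))" by (simp add: exp_add[symmetric])
  moreover have "1 - (b - a) \<le> exp (- (b - a))" using exp_ge_add_one_self[of "- (b - a)"] by linarith
  ultimately have "exp (- a) * (1 - (b - a)) \<le> exp (- b)"
    by (metis exp_gt_zero less_eq_real_def mult_left_mono)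
  then have "exp (- a) * (1 - ga / (k + 1)) + ga * (1 - al) / (k + 1) \<le> exp (- b)"
    using h by (simp add: algebra_simps)
  then show ?thesis unfolding a_def b_def by simp
qed

lemma step_omega:
  fixes Y al ga n k :: real
  assumes al: "0 \<le> al" "al \<le> 1" and ga: "0 \<le> ga" "ga \<le> 1" and k: "0 \<le> k"
    and n: "0 \<le> n" "n \<le> k"
    and Y: "0 \<le> Y" "Y \<le> n / k" "bound_factor al (ga * n / k) \<le> Y"
  defines "Y' \<equiv> Y * (1 - ga / (k + 1)) + ga / (k + 1)"
  shows "0 \<le> Y'" "Y' \<le> (n + 1) / (k + 1)" "bound_factor al (ga * (n + 1) / (k + 1)) \<le> Y'"
proof -
  have Kp: "k + 1 > 0" using k by auto
  have q: "0 \<le> 1 - ga / (k + 1)" using ga k by (simp add: field_simps)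
  show "0 \<le> Y'" unfolding Y'_def using q Y Kp ga by auto
  show "Y' \<le> (n + 1) / (k + 1)"
  proof (cases "k = 0")
    case True
    then have "n = 0" "Y = 0" using n Y by auto
    then show ?thesis using True ga unfolding Y'_def by simp
  next
    case False
    then have kp: "k > 0" using k by auto
    have "Y * (1 - ga / (k + 1)) \<le> n / k * (1 - ga / (k + 1))" using Y q by (intro mult_right_mono) auto
    then have "Y' \<le> n / k * (1 - ga / (k + 1)) + ga / (k + 1)" unfolding Y'_def by simp
    also have "\<dots> \<le> (n + 1) / (k + 1)"
    proof -
      have e1: "n / k * (1 - ga / (k + 1)) + ga / (k + 1) = (n * (k + 1 - ga) + ga * k) / (k * (k + 1))"
        using kp by (simp add: field_simps add_nonneg_eq_0_iff)
      have e2: "(n + 1) / (k + 1) = ((n + 1) * k) / (k * (k + 1))" using kp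
        by (metis less_irrefl mult.commute nonzero_mult_divide_mult_cancel_left)
      have i1: "n * (k + 1 - ga) + ga * k \<le> (n + 1) * k"
      proof -
        have "ga * (k - n) \<le> 1 * (k - n)" using ga n by (intro mult_right_mono) auto
        then show ?thesis by (simp add: algebra_simps)
      qed
      have d: "k * (k + 1) > 0" using kp by simp
      have "(n * (k + 1 - ga) + ga * k) / (k * (k + 1)) \<le> ((n + 1) * k) / (k * (k + 1))"
        by (rule divide_right_mono[OF i1]) (use d in simp)
      then show ?thesis by (simp only: e1 e2)
    qed
    finally show ?thesis .
  qed
  show "bound_factor al (ga * (n + 1) / (k + 1)) \<le> Y'"
  proof (cases "al = 0")
    case True
    show ?thesis
    proof (cases "k = 0")
      case True
      then have "n = 0" using n by auto
      then show ?thesis using True \<open>al = 0\<close> Y unfolding Y'_def by (simp add: bound_factor_def)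
    next
      case False
      then have kp: "k > 0" using k by auto
      have "ga * n / k * (1 - ga / (k + 1)) \<le> Y * (1 - ga / (k + 1))"
        using Y(3) True q by (intro mult_right_mono) (auto simp: bound_factor_def)
      moreover have "ga * (n + 1) / (k + 1) \<le> ga * n / k * (1 - ga / (k + 1)) + ga / (k + 1)"
      proof -
        have "ga * n * ga \<le> ga * n * 1" using ga n by (intro mult_left_mono) auto
        then have i1: "ga * (n + 1) * k \<le> ga * n * (k + 1 - ga) + ga * k" by (simp add: algebra_simps)
        have e1: "ga * n / k * (1 - ga / (k + 1)) + ga / (k + 1) = (ga * n * (k + 1 - ga) + ga * k) / (k * (k + 1))"
          using kp by (simp add: field_simps add_nonneg_eq_0_iff)
        have e2: "ga * (n + 1) / (k + 1) = (ga * (n + 1) * k) / (k * (k + 1))" using kp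
          by (metis less_irrefl mult.commute nonzero_mult_divide_mult_cancel_left)
        have d: "k * (k + 1) > 0" using kp by simp
        have "(ga * (n + 1) * k) / (k * (k + 1)) \<le> (ga * n * (k + 1 - ga) + ga * k) / (k * (k + 1))"
          by (rule divide_right_mono[OF i1]) (use d in simp)
        then show ?thesis by (simp only: e1 e2)
      qed
      ultimately show ?thesis using True unfolding Y'_def by (simp add: bound_factor_def)
    qed
  next
    case False
    then have alp: "al > 0" using al by auto
    have h1: "1 - exp (- (al * ga * n / k)) \<le> al * Y"
      using Y(3) alp by (simp add: bound_factor_def field_simps)
    have "al * Y' = al * Y * (1 - ga / (k + 1)) + al * ga / (k + 1)" unfolding Y'_def by (simp add: algebra_simps)
    also have "\<dots> \<ge> (1 - exp (- (al * ga * n / k))) * (1 - ga / (k + 1)) + al * ga / (k + 1)"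
      using h1 q by (intro add_right_mono mult_right_mono) auto
    finally have "al * Y' \<ge> 1 - (exp (- (al * ga * n / k)) * (1 - ga / (k + 1)) + ga * (1 - al) / (k + 1))"
      by (simp add: algebra_simps add_divide_distrib diff_divide_distrib)
    then have h: "al * Y' \<ge> 1 - exp (- (al * ga * (n + 1) / (k + 1)))"
      using key_exp_ineq[OF al ga n] by linarith
    have eq: "- al * (ga * (n + 1) / (k + 1)) = - (al * ga * (n + 1) / (k + 1))" by simp
    have "1 - exp (- al * (ga * (n + 1) / (k + 1))) \<le> al * Y'" using h by (simp only: eq)
    then show ?thesis using alp by (simp add: bound_factor_def divide_le_eq mult.commute)
  qed
qed


definition gprop :: "(nat set \<Rightarrow> real) \<Rightarrow> nat set \<Rightarrow> real \<Rightarrow> bool" where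
  "gprop f I g \<longleftrightarrow> (\<forall>Om S. Om \<subseteq> I \<longrightarrow> S \<subseteq> I \<longrightarrow>
        (\<Sum>w\<in>Om - S. marg f {w} S) \<ge> g * marg f Om S)"

definition aprop :: "(nat set \<Rightarrow> real) \<Rightarrow> nat set \<Rightarrow> real \<Rightarrow> bool" where
  "aprop f I a \<longleftrightarrow> (\<forall>Om S j. Om \<subseteq> I \<longrightarrow> S \<subseteq> I \<longrightarrow> j \<in> S - Om \<longrightarrow>
        marg f {j} ((S - {j}) \<union> Om) \<ge> (1 - a) * marg f {j} (S - {j}))"

lemma subm_ratio_props:
  assumes mono: "\<And>S X. S \<subseteq> I \<Longrightarrow> X \<subseteq> I \<Longrightarrow> f S \<le> f (S \<union> X)"
  shows "subm_ratio f I \<in> {0..1} \<and> gprop f I (subm_ratio f I) \<and>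
         (\<forall>g. g \<in> {0..1} \<longrightarrow> gprop f I g \<longrightarrow> g \<le> subm_ratio f I)"
proof -
  define P where "P = {g. g \<in> {0..1} \<and> gprop f I g}"
  have margnn: "marg f Om S \<ge> 0" if "Om \<subseteq> I" "S \<subseteq> I" for Om S
    using mono[OF that(2) that(1)] by (simp add: marg_def)
  have sumnn: "(\<Sum>w\<in>Om - S. marg f {w} S) \<ge> 0" if "Om \<subseteq> I" "S \<subseteq> I" for Om S
    using that by (intro sum_nonneg margnn) auto
  have P0: "0 \<in> P" unfolding P_def gprop_def using sumnn by auto
  have bdd: "bdd_above P" by (rule bdd_aboveI[of _ 1]) (auto simp: P_def)
  define g0 where "g0 = Sup P"
  have up: "g \<le> g0" if "g \<in> P" for g using cSup_upper[OF that bdd] g0_def by simp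
  have g00: "0 \<le> g0" using up[OF P0] .
  have Pne: "P \<noteq> {}" using P0 by auto
  have g01: "g0 \<le> 1" unfolding g0_def by (rule cSup_least[OF Pne]) (auto simp: P_def)
  have gp: "gprop f I g0" unfolding gprop_def
  proof (intro allI impI)
    fix Om S assume h: "Om \<subseteq> I" "S \<subseteq> I"
    show "(\<Sum>w\<in>Om - S. marg f {w} S) \<ge> g0 * marg f Om S"
    proof (cases "marg f Om S = 0")
      case True then show ?thesis using sumnn[OF h] by simp
    next
      case False
      then have mp: "marg f Om S > 0" using margnn[OF h] by auto
      have "g0 \<le> (\<Sum>w\<in>Om - S. marg f {w} S) / marg f Om S"
        unfolding g0_def
      proof (rule cSup_least)
        show "P \<noteq> {}" using P0 by auto
        fix g assume "g \<in> P"
        then have "g * marg f Om S \<le> (\<Sum>w\<in>Om - S. marg f {w} S)"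
          using h unfolding P_def gprop_def by auto
        then show "g \<le> (\<Sum>w\<in>Om - S. marg f {w} S) / marg f Om S"
          using mp by (simp add: le_divide_eq)
      qed
      then show ?thesis using mp by (simp add: le_divide_eq)
    qed
  qed
  have g0P: "g0 \<in> P" using g00 g01 gp unfolding P_def by auto
  have eq: "subm_ratio f I = g0"
    unfolding subm_ratio_def gprop_def[symmetric]
    by (rule Greatest_equality) (use g0P up in \<open>auto simp: P_def\<close>)
  show ?thesis using eq g0P up unfolding P_def by auto
qed

lemma curvature_props:
  assumes mono: "\<And>S X. S \<subseteq> I \<Longrightarrow> X \<subseteq> I \<Longrightarrow> f S \<le> f (S \<union> X)"
  shows "curvature f I \<in> {0..1} \<and> aprop f I (curvature f I) \<and>
         (\<forall>a. a \<in> {0..1} \<longrightarrow> aprop f I a \<longrightarrow> curvature f I \<le> a)"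
proof -
  define P where "P = {a. a \<in> {0..1} \<and> aprop f I a}"
  have margnn: "marg f {j} T \<ge> 0" if "j \<in> I" "T \<subseteq> I" for j T
    using mono[OF that(2), of "{j}"] that by (simp add: marg_def)
  have P1: "1 \<in> P" unfolding P_def aprop_def by (auto intro!: margnn)
  have bdd: "bdd_below P" by (rule bdd_belowI[of _ 0]) (auto simp: P_def)
  define a0 where "a0 = Inf P"
  have lo: "a0 \<le> a" if "a \<in> P" for a using cInf_lower[OF that bdd] a0_def by simp
  have a01: "a0 \<le> 1" using lo[OF P1] .
  have Pne: "P \<noteq> {}" using P1 by auto
  have a00: "0 \<le> a0" unfolding a0_def by (rule cInf_greatest[OF Pne]) (auto simp: P_def)
  have ap: "aprop f I a0" unfolding aprop_def
  proof (intro allI impI)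
    fix Om S j assume h: "Om \<subseteq> I" "S \<subseteq> I" "j \<in> S - Om"
    have jI: "j \<in> I" using h by auto
    have l0: "marg f {j} ((S - {j}) \<union> Om) \<ge> 0" using h by (intro margnn) auto
    show "marg f {j} ((S - {j}) \<union> Om) \<ge> (1 - a0) * marg f {j} (S - {j})"
    proof (cases "marg f {j} (S - {j}) = 0")
      case True then show ?thesis using l0 by simp
    next
      case False
      have "S - {j} \<subseteq> I" using h by auto
      then have mp: "marg f {j} (S - {j}) > 0" using margnn[OF jI \<open>S - {j} \<subseteq> I\<close>] False by linarith
      have "1 - marg f {j} ((S - {j}) \<union> Om) / marg f {j} (S - {j}) \<le> a0"
        unfolding a0_def
      proof (rule cInf_greatest)
        show "P \<noteq> {}" using P1 by auto
        fix a assume "a \<in> P"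
        then have "(1 - a) * marg f {j} (S - {j}) \<le> marg f {j} ((S - {j}) \<union> Om)"
          using h unfolding P_def aprop_def by auto
        then have "1 - a \<le> marg f {j} ((S - {j}) \<union> Om) / marg f {j} (S - {j})"
          using mp by (simp add: le_divide_eq)
        then show "1 - marg f {j} ((S - {j}) \<union> Om) / marg f {j} (S - {j}) \<le> a" by linarith
      qed
      then have "1 - a0 \<le> marg f {j} ((S - {j}) \<union> Om) / marg f {j} (S - {j})" by linarith
      then show ?thesis using mp by (simp add: le_divide_eq)
    qed
  qed
  have a0P: "a0 \<in> P" using a00 a01 ap unfolding P_def by auto
  have eq: "curvature f I = a0"
    unfolding curvature_def aprop_def[symmetric]
    by (rule Least_equality) (use a0P lo in \<open>auto simp: P_def\<close>)
  show ?thesis using eq a0P lo unfolding P_def by auto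
qed


lemma greedy_bound:
  fixes f :: "nat set \<Rightarrow> real" and I Om Sg :: "nat set" and s :: nat and al ga :: real
  assumes fin: "finite I" and f0: "f {} = 0"
    and mono: "\<And>S X. S \<subseteq> I \<Longrightarrow> X \<subseteq> I \<Longrightarrow> f S \<le> f (S \<union> X)"
    and al: "0 \<le> al" "al \<le> 1" and ga: "0 \<le> ga" "ga \<le> 1"
    and gp: "gprop f I ga" and ap: "aprop f I al"
    and OmI: "Om \<subseteq> I" and cOm: "card Om \<le> s" and s0: "0 < s"
    and gr: "greedy_output f I s Sg"
  shows "bound_factor al ga * f Om \<le> f Sg"
proof -
  obtain Sq where Sq0: "Sq 0 = {}" and stp: "\<forall>i<s. \<exists>w \<in> I - Sq i. Sq (Suc i) = insert w (Sq i) \<and>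
        (\<forall>w' \<in> I - Sq i. f (insert w' (Sq i)) - f (Sq i) \<le> f (Sq (Suc i)) - f (Sq i))"
    and SgE: "Sg = Sq s"
    using gr unfolding greedy_output_def by blast
  have "\<forall>i\<in>{..<s}. \<exists>x. x \<in> I - Sq i \<and> Sq (Suc i) = insert x (Sq i) \<and>
        (\<forall>w' \<in> I - Sq i. f (insert w' (Sq i)) - f (Sq i) \<le> f (Sq (Suc i)) - f (Sq i))"
    using stp by blast
  then obtain w where w: "\<forall>i\<in>{..<s}. w i \<in> I - Sq i \<and> Sq (Suc i) = insert (w i) (Sq i) \<and>
        (\<forall>w' \<in> I - Sq i. f (insert w' (Sq i)) - f (Sq i) \<le> f (Sq (Suc i)) - f (Sq i))"
    by (metis bchoice)
  have wI: "w i \<in> I" "w i \<notin> Sq i" if "i < s" for i using w that by auto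
  have SqS: "Sq (Suc i) = insert (w i) (Sq i)" if "i < s" for i using w that by auto
  have grd: "f (insert x (Sq i)) - f (Sq i) \<le> f (Sq (Suc i)) - f (Sq i)" if "i < s" "x \<in> I - Sq i" for i x
  proof -
    have "\<forall>w'\<in>I - Sq i. f (insert w' (Sq i)) - f (Sq i) \<le> f (Sq (Suc i)) - f (Sq i)"
      using w that(1) by blast
    then show ?thesis using that(2) by blast
  qed
  have SqI: "Sq i \<subseteq> I \<and> finite (Sq i) \<and> card (Sq i) = i" if "i \<le> s" for i
    using that
  proof (induction i)
    case 0 then show ?case by (simp add: Sq0)
  next
    case (Suc i)
    then have "i < s" by auto
    then show ?case using Suc SqS wI by auto
  qed
  define rho where "rho i = f (Sq (Suc i)) - f (Sq i)" for i
  have rho_nn: "0 \<le> rho i" if "i < s" for i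
  proof -
    have "Sq i \<subseteq> I" "{w i} \<subseteq> I" using SqI[of i] wI[OF that] that by auto
    then have "f (Sq i) \<le> f (Sq i \<union> {w i})" by (rule mono)
    then show ?thesis unfolding rho_def using SqS[OF that] by simp
  qed
  have grd': "f (Sq i \<union> {x}) - f (Sq i) \<le> rho i" if "i < s" "x \<in> I - Sq i" for i x
    using grd[OF that] unfolding rho_def by simp
  define E where "E i = (w i \<in> Om)" for i
  define A where "A t = (\<Sum>j<t. if E j then 0 else rho j)" for t
  define B where "B t = (\<Sum>j<t. if E j then rho j else 0)" for t
  have FAB: "f (Sq t) = A t + B t" if "t \<le> s" for t
    using that
  proof (induction t)
    case 0 then show ?case by (simp add: Sq0 f0 A_def B_def)
  next
    case (Suc t)
    then have "f (Sq (Suc t)) = f (Sq t) + rho t" unfolding rho_def by simp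
    then show ?case using Suc by (simp add: A_def B_def)
  qed
  define m where "m t = card (Sq t \<inter> Om)" for t
  define k where "k t = s - m t" for t
  have m_le: "m t \<le> t" if "t \<le> s" for t
  proof -
    have "m t \<le> card (Sq t)" unfolding m_def using SqI[OF that] by (intro card_mono) auto
    then show ?thesis using SqI[OF that] by simp
  qed
  have m_Suc: "m (Suc t) = m t + (if E t then 1 else 0)" if "t < s" for t
  proof -
    have fin_t: "finite (Sq t \<inter> Om)" using SqI[of t] that by auto
    show ?thesis
    proof (cases "E t")
      case True
      then have "Sq (Suc t) \<inter> Om = insert (w t) (Sq t \<inter> Om)" using SqS[OF that] E_def by auto
      then show ?thesis using True fin_t wI[OF that] unfolding m_def by simp
    next
      case False
      then have "Sq (Suc t) \<inter> Om = Sq t \<inter> Om" using SqS[OF that] E_def by auto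
      then show ?thesis using False unfolding m_def by simp
    qed
  qed
  have card_diff: "card (Om - Sq t) \<le> k t" if "t \<le> s" for t
  proof -
    have finO: "finite Om" using OmI fin finite_subset by auto
    have "card (Om - Sq t) = card Om - card (Om \<inter> Sq t)" by (rule card_Diff_subset_Int) (use finO in auto)
    moreover have "Om \<inter> Sq t = Sq t \<inter> Om" by auto
    ultimately show ?thesis using cOm unfolding k_def m_def by simp
  qed
  have curv: "f Om + (1 - al) * A t \<le> f (Sq t \<union> Om)" if "t \<le> s" for t
    using that
  proof (induction t)
    case 0 then show ?case by (simp add: A_def Sq0)
  next
    case (Suc t)
    then have ts: "t < s" by auto
    have IH: "f Om + (1 - al) * A t \<le> f (Sq t \<union> Om)" using Suc by auto
    show ?case
    proof (cases "E t")
      case True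
      then have "Sq (Suc t) \<union> Om = Sq t \<union> Om" using SqS[OF ts] E_def by auto
      moreover have "A (Suc t) = A t" using True by (simp add: A_def)
      ultimately show ?thesis using IH by simp
    next
      case False
      have jS: "w t \<in> Sq (Suc t) - Om" using False E_def SqS[OF ts] by auto
      have SI: "Sq (Suc t) \<subseteq> I" using SqI[of "Suc t"] Suc by auto
      have "marg f {w t} ((Sq (Suc t) - {w t}) \<union> Om) \<ge> (1 - al) * marg f {w t} (Sq (Suc t) - {w t})"
        using ap OmI SI jS unfolding aprop_def by blast
      moreover have "Sq (Suc t) - {w t} = Sq t" using SqS[OF ts] wI[OF ts] by auto
      ultimately have h: "f (Sq t \<union> Om \<union> {w t}) - f (Sq t \<union> Om) \<ge> (1 - al) * rho t"
        unfolding marg_def rho_def using SqS[OF ts] by simp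
      have "Sq (Suc t) \<union> Om = Sq t \<union> Om \<union> {w t}" using SqS[OF ts] by auto
      moreover have "A (Suc t) = A t + rho t" using False by (simp add: A_def)
      ultimately show ?thesis using IH h by (simp add: algebra_simps)
    qed
  qed
  define D where "D t = f Om - al * A t - B t" for t
  have cons: "ga * D t \<le> real (k t) * rho t" if "t < s" for t
  proof -
    have tS: "Sq t \<subseteq> I" using SqI[of t] that by auto
    have "ga * marg f Om (Sq t) \<le> (\<Sum>x\<in>Om - Sq t. marg f {x} (Sq t))"
      using gp OmI tS unfolding gprop_def by blast
    also have "\<dots> \<le> real (card (Om - Sq t)) * rho t"
    proof (rule sum_bounded_above)
      fix x assume "x \<in> Om - Sq t"
      then show "marg f {x} (Sq t) \<le> rho t" unfolding marg_def using grd'[OF that] OmI by auto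
    qed
    also have "\<dots> \<le> real (k t) * rho t"
      using card_diff[of t] that rho_nn[OF that] by (intro mult_right_mono) auto
    finally have h1: "ga * marg f Om (Sq t) \<le> real (k t) * rho t" .
    have "D t \<le> marg f Om (Sq t)"
      using curv[of t] FAB[of t] that unfolding marg_def D_def by (simp add: algebra_simps)
    then have "ga * D t \<le> ga * marg f Om (Sq t)" using ga by (simp add: mult_left_mono)
    then show ?thesis using h1 by linarith
  qed
  have bkw: "\<exists>Y. 0 \<le> Y \<and> Y \<le> real r / real (k (s - r)) \<and>
      bound_factor al (ga * real r / real (k (s - r))) \<le> Y \<and>
      Y * D (s - r) \<le> f (Sq s) - f (Sq (s - r))" if "r \<le> s" for r
    using that
  proof (induction r)
    case 0
    show ?case by (rule exI[of _ 0]) (simp add: bound_factor_def)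
  next
    case (Suc r)
    define i where "i = s - Suc r"
    have iS: "i < s" "s - r = Suc i" using Suc.prems unfolding i_def by auto
    obtain Y where Y: "0 \<le> Y" "Y \<le> real r / real (k (Suc i))"
      "bound_factor al (ga * real r / real (k (Suc i))) \<le> Y"
      "Y * D (Suc i) \<le> f (Sq s) - f (Sq (Suc i))"
      using Suc iS by auto
    have mi: "m i \<le> i" using m_le[of i] iS by auto
    have mSi: "m (Suc i) \<le> Suc i" using m_le[of "Suc i"] iS by auto
    have K1: "1 \<le> k i" using mi iS unfolding k_def by auto
    have rk: "r \<le> k (Suc i)" using mSi iS unfolding k_def by auto
    have Yle1: "Y \<le> 1"
    proof (cases "k (Suc i) = 0")
      case True then show ?thesis using Y(2) by simp
    next
      case False
      then have "real r / real (k (Suc i)) \<le> 1" using rk by (simp add: divide_le_eq)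
      then show ?thesis using Y(2) by linarith
    qed
    define a where "a = (if E i then 1 else al)"
    have a01: "0 \<le> a" "a \<le> 1" using al unfolding a_def by auto
    have DS: "D (Suc i) = D i - a * rho i" unfolding D_def A_def B_def a_def by (simp add: algebra_simps)
    define Y' where "Y' = Y * (1 - a * ga / real (k i)) + ga / real (k i)"
    have Kp: "real (k i) > 0" using K1 by simp
    have aY: "0 \<le> 1 - a * Y" using a01 Y(1) Yle1 by (metis diff_ge_0_iff_ge mult_le_one)
    have rho_lb: "ga * D i / real (k i) \<le> rho i" using cons[OF iS(1)] Kp by (simp add: divide_le_eq mult.commute)
    have "f (Sq s) - f (Sq i) = rho i + (f (Sq s) - f (Sq (Suc i)))" unfolding rho_def by simp
    also have "\<dots> \<ge> rho i + Y * (D i - a * rho i)" using Y(4) DS by simp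
    finally have h1: "rho i * (1 - a * Y) + Y * D i \<le> f (Sq s) - f (Sq i)" by (simp add: algebra_simps)
    have "ga * D i / real (k i) * (1 - a * Y) \<le> rho i * (1 - a * Y)"
      using rho_lb aY by (rule mult_right_mono)
    moreover have "Y' * D i = ga * D i / real (k i) * (1 - a * Y) + Y * D i"
      using Kp unfolding Y'_def by (simp add: field_simps)
    ultimately have h2: "Y' * D i \<le> f (Sq s) - f (Sq i)"
      using h1 by linarith
    have bounds: "0 \<le> Y' \<and> Y' \<le> real (Suc r) / real (k i) \<and>
        bound_factor al (ga * real (Suc r) / real (k i)) \<le> Y'"
    proof (cases "E i")
      case True
      have kS: "k i = k (Suc i) + 1" using m_Suc[OF iS(1)] True mi iS unfolding k_def by auto
      have r0: "0 \<le> real r" "real r \<le> real (k (Suc i))" using rk by auto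
      note st = step_omega[OF al ga _ r0 Y(1-3)]
      have "Y' = Y * (1 - ga / (real (k (Suc i)) + 1)) + ga / (real (k (Suc i)) + 1)"
        unfolding Y'_def a_def using True kS by (simp add: add.commute)
      then show ?thesis using st kS by (simp add: add.commute)
    next
      case False
      have kS: "k (Suc i) = k i" using m_Suc[OF iS(1)] False unfolding k_def by auto
      have r0: "0 \<le> real r" "real r + 1 \<le> real (k i)" using mi iS unfolding k_def by auto
      have YY: "0 \<le> Y" "Y \<le> real r / real (k i)" "bound_factor al (ga * real r / real (k i)) \<le> Y"
        using Y kS by auto
      note st = step_plain[OF al ga _ r0 YY]
      have "Y' = Y * (1 - al * ga / real (k i)) + ga / real (k i)"
        unfolding Y'_def a_def using False by simp
      then show ?thesis using st K1 by (simp add: add.commute)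
    qed
    have si: "s - Suc r = i" by (simp add: i_def)
    show ?case unfolding si using bounds h2 by (intro exI[of _ Y']) simp
  qed
  obtain Y where Y: "bound_factor al (ga * real s / real (k 0)) \<le> Y" "Y * D 0 \<le> f (Sq s) - f (Sq 0)"
    using bkw[of s] by auto
  have k0: "k 0 = s" unfolding k_def m_def by (simp add: Sq0)
  have D0: "D 0 = f Om" unfolding D_def A_def B_def by simp
  have fO: "0 \<le> f Om" using mono[of "{}" Om] OmI f0 by simp
  have "bound_factor al ga \<le> Y" using Y(1) k0 s0 by simp
  then have "bound_factor al ga * f Om \<le> Y * f Om" using fO by (rule mult_right_mono)
  also have "\<dots> \<le> f Sg" using Y(2) D0 SgE Sq0 f0 by simp
  finally show ?thesis .
qed

lemma qf_sum:
  fixes A :: "real mat"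
  assumes A: "A \<in> carrier_mat N N" and x: "x \<in> carrier_vec N" and y: "y \<in> carrier_vec N"
  shows "x \<bullet> (A *\<^sub>v y) = (\<Sum>i<N. \<Sum>j<N. A $$ (i, j) * x $ i * y $ j)"
proof -
  have "x \<bullet> (A *\<^sub>v y) = (\<Sum>i<N. x $ i * (\<Sum>j<N. A $$ (i, j) * y $ j))"
    using A x y by (simp add: scalar_prod_def row_def lessThan_atLeast0)
  also have "\<dots> = (\<Sum>i<N. \<Sum>j<N. A $$ (i, j) * x $ i * y $ j)"
    by (simp add: sum_distrib_left algebra_simps)
  finally show ?thesis .
qed

lemma sp_sum:
  fixes x :: "real vec"
  assumes x: "x \<in> carrier_vec N" and y: "y \<in> carrier_vec N"
  shows "x \<bullet> y = (\<Sum>i<N. x $ i * y $ i)"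
  using x y by (simp add: scalar_prod_def lessThan_atLeast0)

lemma sp_self_nonneg:
  fixes x :: "real vec"
  shows "0 \<le> x \<bullet> x"
  by (simp add: scalar_prod_def sum_nonneg)

lemma sp_self_zero:
  fixes x :: "real vec"
  assumes x: "x \<in> carrier_vec N" and z: "x \<bullet> x = 0"
  shows "x = 0\<^sub>v N"
proof (rule eq_vecI)
  fix i assume i: "i < dim_vec (0\<^sub>v N)"
  have "(\<Sum>j<N. x $ j * x $ j) = 0" using z x by (simp add: sp_sum[OF x x])
  then have "\<forall>j\<in>{..<N}. x $ j * x $ j = 0" by (subst sum_nonneg_eq_0_iff[symmetric]) auto
  then show "x $ i = 0\<^sub>v N $ i" using i by auto
qed (use x in auto)

lemma bil_sym:
  fixes A :: "real mat"
  assumes A: "A \<in> carrier_mat N N" and s: "transpose_mat A = A"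
    and u: "u \<in> carrier_vec N" and v: "v \<in> carrier_vec N"
  shows "u \<bullet> (A *\<^sub>v v) = v \<bullet> (A *\<^sub>v u)"
proof -
  have "u \<bullet> (A *\<^sub>v v) = (transpose_mat A *\<^sub>v u) \<bullet> v"
    using transpose_vec_mult_scalar[OF A v u] by simp
  also have "\<dots> = (A *\<^sub>v u) \<bullet> v" using s by simp
  also have "\<dots> = v \<bullet> (A *\<^sub>v u)" by (rule comm_scalar_prod[of _ N]) (use A u v in auto)
  finally show ?thesis .
qed

lemma quad_expand:
  fixes A :: "real mat"
  assumes A: "A \<in> carrier_mat N N" and s: "transpose_mat A = A"
    and u: "u \<in> carrier_vec N" and v: "v \<in> carrier_vec N"
  shows "(u - t \<cdot>\<^sub>v v) \<bullet> (A *\<^sub>v (u - t \<cdot>\<^sub>v v)) =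
    u \<bullet> (A *\<^sub>v u) - 2 * t * (v \<bullet> (A *\<^sub>v u)) + t^2 * (v \<bullet> (A *\<^sub>v v))"
proof -
  have tv: "t \<cdot>\<^sub>v v \<in> carrier_vec N" using v by simp
  have Au: "A *\<^sub>v u \<in> carrier_vec N" "A *\<^sub>v v \<in> carrier_vec N" using A u v by auto
  have "A *\<^sub>v (u - t \<cdot>\<^sub>v v) = A *\<^sub>v u - t \<cdot>\<^sub>v (A *\<^sub>v v)"
    using A u v tv by (simp add: mult_minus_distrib_mat_vec mult_mat_vec)
  then have "(u - t \<cdot>\<^sub>v v) \<bullet> (A *\<^sub>v (u - t \<cdot>\<^sub>v v)) =
     (u - t \<cdot>\<^sub>v v) \<bullet> (A *\<^sub>v u - t \<cdot>\<^sub>v (A *\<^sub>v v))" by simp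
  also have "\<dots> = u \<bullet> (A *\<^sub>v u) - t * (u \<bullet> (A *\<^sub>v v)) - t * (v \<bullet> (A *\<^sub>v u)) + t * t * (v \<bullet> (A *\<^sub>v v))"
    using u v tv Au
    by (simp add: minus_scalar_prod_distrib[of _ N] scalar_prod_minus_distrib[of _ N] algebra_simps)
  also have "u \<bullet> (A *\<^sub>v v) = v \<bullet> (A *\<^sub>v u)" by (rule bil_sym[OF A s u v])
  finally show ?thesis by (simp add: power2_eq_square algebra_simps)
qed

lemma quad_zero_lemma:
  fixes a b :: real
  assumes h: "\<And>t. 0 \<le> t^2 * b - 2 * t * a" and a: "0 \<le> a"
  shows "a = 0"
proof (rule ccontr)
  assume "a \<noteq> 0"
  then have ap: "a > 0" using a by auto
  define t where "t = a / (\<bar>b\<bar> + 1)"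
  have tp: "t > 0" using ap by (simp add: t_def)
  have "t * \<bar>b\<bar> < a" using ap unfolding t_def by (simp add: field_simps)
  then have "t * b < 2 * a" using ap by (smt (verit) abs_ge_self mult_left_mono tp)
  then have "t * (t * b) < t * (2 * a)" using tp by simp
  then have "t^2 * b - 2 * t * a < 0" by (simp add: power2_eq_square algebra_simps)
  with h[of t] show False by simp
qed

lemma psd_zero_kernel:
  fixes A :: "real mat"
  assumes A: "A \<in> carrier_mat N N" and s: "transpose_mat A = A"
    and psd: "\<And>x. x \<in> carrier_vec N \<Longrightarrow> 0 \<le> x \<bullet> (A *\<^sub>v x)"
    and u: "u \<in> carrier_vec N" and z: "u \<bullet> (A *\<^sub>v u) = 0"
  shows "A *\<^sub>v u = 0\<^sub>v N"
proof -
  define y where "y = A *\<^sub>v u"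
  have y: "y \<in> carrier_vec N" using A u by (simp add: y_def)
  have "\<And>t. 0 \<le> t^2 * (y \<bullet> (A *\<^sub>v y)) - 2 * t * (y \<bullet> y)"
  proof -
    fix t :: real
    have "0 \<le> (u - t \<cdot>\<^sub>v y) \<bullet> (A *\<^sub>v (u - t \<cdot>\<^sub>v y))" using psd u y by simp
    also have "\<dots> = u \<bullet> (A *\<^sub>v u) - 2 * t * (y \<bullet> (A *\<^sub>v u)) + t^2 * (y \<bullet> (A *\<^sub>v y))"
      by (rule quad_expand[OF A s u y])
    finally show "0 \<le> t^2 * (y \<bullet> (A *\<^sub>v y)) - 2 * t * (y \<bullet> y)" using z by (simp add: y_def)
  qed
  then have "y \<bullet> y = 0" by (rule quad_zero_lemma) (rule sp_self_nonneg)
  then show ?thesis using sp_self_zero[OF y] by (simp add: y_def)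
qed


lemma smat_mv:
  fixes A :: "real mat"
  assumes "A \<in> carrier_mat N M" "v \<in> carrier_vec M"
  shows "(k \<cdot>\<^sub>m A) *\<^sub>v v = k \<cdot>\<^sub>v (A *\<^sub>v v)"
  using assms by (intro eq_vecI) (auto simp: scalar_prod_def sum_distrib_left algebra_simps)

lemma compact_sphere_fun:
  "compact {g :: nat \<Rightarrow> real. (\<forall>i. g i \<in> (if i < N then {-1..1} else {0})) \<and> (\<Sum>i<N. (g i)^2) = 1}"
proof -
  define S where "S = (\<lambda>i::nat. if i < N then {-1..1::real} else {0})"
  have "compactin (product_topology (\<lambda>_. euclidean) UNIV) (PiE UNIV S)"
    by (subst compactin_PiE) (auto simp: S_def)
  then have c1: "compact (PiE UNIV S)"
    by (simp add: euclidean_product_topology)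
  have "PiE UNIV S = {g. \<forall>i. g i \<in> S i}" by (auto simp: PiE_def Pi_def)
  with c1 have c2: "compact {g. \<forall>i. g i \<in> S i}" by simp
  have cl: "closed {g :: nat \<Rightarrow> real. (\<Sum>i<N. (g i)^2) = 1}"
    by (rule closed_Collect_eq) (intro continuous_intros continuous_on_product_then_coordinatewise continuous_on_id)+
  have "{g :: nat \<Rightarrow> real. (\<forall>i. g i \<in> S i) \<and> (\<Sum>i<N. (g i)^2) = 1} =
      {g. \<forall>i. g i \<in> S i} \<inter> {g. (\<Sum>i<N. (g i)^2) = 1}" by auto
  then show ?thesis using compact_Int_closed[OF c2 cl] by (simp add: S_def)
qed

lemma rayleigh_ext:
  fixes A :: "real mat"
  assumes A: "A \<in> carrier_mat N N" and s: "transpose_mat A = A" and N: "0 < N"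
    and sg: "sg = 1 \<or> sg = -1"
  shows "\<exists>k. eigenvalue A k \<and> (\<forall>x \<in> carrier_vec N. sg * (x \<bullet> (A *\<^sub>v x)) \<le> sg * k * (x \<bullet> x))"
proof -
  define Q where "Q g = (\<Sum>i<N. \<Sum>j<N. A $$ (i, j) * g i * g j)" for g :: "nat \<Rightarrow> real"
  define K where "K = {g :: nat \<Rightarrow> real. (\<forall>i. g i \<in> (if i < N then {-1..1} else {0})) \<and> (\<Sum>i<N. (g i)^2) = 1}"
  have comp: "compact K" unfolding K_def by (rule compact_sphere_fun)
  have ne: "K \<noteq> {}"
  proof -
    have "(\<lambda>i. if i = 0 then 1 else 0) \<in> K" using N unfolding K_def
      by (auto simp: if_distrib[of "\<lambda>x. x^2"] cong: if_cong)
    then show ?thesis by auto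
  qed
  have cont: "continuous_on K (\<lambda>g. sg * Q g)" unfolding Q_def
    by (intro continuous_intros continuous_on_product_then_coordinatewise continuous_on_id)
  obtain g where gK: "g \<in> K" and gmax: "\<And>h. h \<in> K \<Longrightarrow> sg * Q h \<le> sg * Q g"
    using continuous_attains_sup[OF comp ne cont] by auto
  define k where "k = Q g"
  define x0 where "x0 = vec N g"
  have x0: "x0 \<in> carrier_vec N" by (simp add: x0_def)
  have qfQ: "x \<bullet> (A *\<^sub>v x) = Q (\<lambda>i. x $ i)" if "x \<in> carrier_vec N" for x
    using qf_sum[OF A that that] by (simp add: Q_def)
  have bound: "sg * (x \<bullet> (A *\<^sub>v x)) \<le> sg * k * (x \<bullet> x)" if x: "x \<in> carrier_vec N" for x
  proof (cases "x \<bullet> x = 0")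
    case True
    then have "x = 0\<^sub>v N" using sp_self_zero[OF x] by simp
    moreover have "0\<^sub>v N \<bullet> (A *\<^sub>v 0\<^sub>v N) = 0"
      by (rule scalar_prod_left_zero) (use A in simp)
    ultimately show ?thesis by simp
  next
    case False
    then have pos: "x \<bullet> x > 0" using sp_self_nonneg[of x] by linarith
    define t where "t = sqrt (x \<bullet> x)"
    have tp: "t > 0" using pos by (simp add: t_def)
    have tt: "t^2 = x \<bullet> x" using pos by (simp add: t_def)
    define h where "h i = (if i < N then x $ i / t else 0)" for i
    have sq: "(\<Sum>i<N. (x $ i)^2) = x \<bullet> x" using sp_sum[OF x x] by (simp add: power2_eq_square)
    have hK: "h \<in> K" unfolding K_def
    proof (intro CollectI conjI allI)
      fix i
      show "h i \<in> (if i < N then {-1..1} else {0})"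
      proof (cases "i < N")
        case True
        have "(x $ i)^2 \<le> (\<Sum>j<N. (x $ j)^2)"
          using True by (intro member_le_sum) auto
        then have "(x $ i)^2 \<le> t^2" using sq tt by simp
        then have "\<bar>x $ i\<bar> \<le> t" using tp power2_le_imp_le[of "\<bar>x $ i\<bar>" t] by simp
        then have "\<bar>x $ i / t\<bar> \<le> 1" using tp by (simp add: divide_le_eq_1)
        then have "- 1 \<le> x $ i / t \<and> x $ i / t \<le> 1" using abs_le_D1 abs_le_D2 by fastforce
        then show ?thesis using True by (simp add: h_def)
      qed (simp add: h_def)
    next
      have "(\<Sum>i<N. (h i)^2) = (\<Sum>i<N. (x $ i)^2) / t^2"
        by (simp add: h_def power_divide sum_divide_distrib)
      then show "(\<Sum>i<N. (h i)^2) = 1" using sq tt pos by simp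
    qed
    have "Q h = Q (\<lambda>i. x $ i) / t^2"
      unfolding Q_def h_def by (simp add: sum_divide_distrib power2_eq_square)
    then have "x \<bullet> (A *\<^sub>v x) = t^2 * Q h" using qfQ[OF x] tp by simp
    then have "sg * (x \<bullet> (A *\<^sub>v x)) = t^2 * (sg * Q h)" by simp
    also have "\<dots> \<le> t^2 * (sg * Q g)" by (rule mult_left_mono[OF gmax[OF hK]]) simp
    finally show ?thesis using tt by (simp add: k_def algebra_simps)
  qed
  have x0x0: "x0 \<bullet> x0 = 1"
  proof -
    have "x0 \<bullet> x0 = (\<Sum>i<N. (g i)^2)" using sp_sum[OF x0 x0] by (simp add: x0_def power2_eq_square)
    then show ?thesis using gK by (simp add: K_def)
  qed
  have x0A: "x0 \<bullet> (A *\<^sub>v x0) = k" using qfQ[OF x0] by (simp add: x0_def k_def Q_def)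
  define B where "B = sg \<cdot>\<^sub>m (k \<cdot>\<^sub>m 1\<^sub>m N - A)"
  have B: "B \<in> carrier_mat N N" using A by (simp add: B_def minus_carrier_mat)
  have Bmv: "B *\<^sub>v x = sg \<cdot>\<^sub>v (k \<cdot>\<^sub>v x - A *\<^sub>v x)" if x: "x \<in> carrier_vec N" for x
  proof -
    have X: "k \<cdot>\<^sub>m 1\<^sub>m N - A \<in> carrier_mat N N" by (simp add: minus_carrier_mat A)
    have "B *\<^sub>v x = sg \<cdot>\<^sub>v ((k \<cdot>\<^sub>m 1\<^sub>m N - A) *\<^sub>v x)" unfolding B_def by (rule smat_mv[OF X x])
    also have "(k \<cdot>\<^sub>m 1\<^sub>m N - A) *\<^sub>v x = (k \<cdot>\<^sub>m 1\<^sub>m N) *\<^sub>v x - A *\<^sub>v x"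
      by (rule minus_mult_distrib_mat_vec) (use A x in auto)
    also have "(k \<cdot>\<^sub>m 1\<^sub>m N) *\<^sub>v x = k \<cdot>\<^sub>v x" using smat_mv[of "1\<^sub>m N" N N x k] x by simp
    finally show ?thesis .
  qed
  have Bx: "x \<bullet> (B *\<^sub>v x) = sg * k * (x \<bullet> x) - sg * (x \<bullet> (A *\<^sub>v x))" if x: "x \<in> carrier_vec N" for x
  proof -
    have "B *\<^sub>v x = sg \<cdot>\<^sub>v (k \<cdot>\<^sub>v x - A *\<^sub>v x)" by (rule Bmv[OF x])
    then show ?thesis using A x
      by (simp add: scalar_prod_minus_distrib[of _ N] algebra_simps)
  qed
  have Aij: "A $$ (j, i) = A $$ (i, j)" if "i < N" "j < N" for i j
    using s A that by (metis carrier_matD(1) carrier_matD(2) index_transpose_mat(1))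
  have Bs: "transpose_mat B = B"
    unfolding B_def using A Aij by (intro eq_matI) (auto simp: minus_carrier_mat)
  have psd: "0 \<le> x \<bullet> (B *\<^sub>v x)" if "x \<in> carrier_vec N" for x
    using Bx[OF that] bound[OF that] by simp
  have "x0 \<bullet> (B *\<^sub>v x0) = 0" using Bx[OF x0] x0x0 x0A by simp
  then have "B *\<^sub>v x0 = 0\<^sub>v N" using psd_zero_kernel[OF B Bs _ x0] psd by blast
  then have "sg \<cdot>\<^sub>v (k \<cdot>\<^sub>v x0 - A *\<^sub>v x0) = 0\<^sub>v N"
    using Bmv[OF x0] by simp
  then have hz: "(sg \<cdot>\<^sub>v (k \<cdot>\<^sub>v x0 - A *\<^sub>v x0)) $ i = 0" if "i < N" for i
    using that by simp
  have sg0: "sg \<noteq> 0" using sg by auto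
  have "A *\<^sub>v x0 = k \<cdot>\<^sub>v x0"
  proof (rule eq_vecI)
    fix i assume "i < dim_vec (k \<cdot>\<^sub>v x0)"
    then have i: "i < N" using x0 by simp
    have "sg * (k * x0 $ i - (A *\<^sub>v x0) $ i) = 0" using hz[OF i] i x0 A by simp
    then show "(A *\<^sub>v x0) $ i = (k \<cdot>\<^sub>v x0) $ i" using sg0 i x0 by simp
  qed (use A x0 in simp)
  moreover have "x0 \<noteq> 0\<^sub>v N" using x0x0 by auto
  ultimately have "eigenvalue A k" unfolding eigenvalue_def eigenvector_def using A x0 by auto
  then show ?thesis using bound by auto
qed


lemma eig_finite:
  fixes A :: "real mat"
  assumes A: "A \<in> carrier_mat N N"
  shows "finite {k. eigenvalue A k}"
proof -
  have "coeff (char_poly A) N = 1" using degree_monic_char_poly[OF A] by simp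
  then have "char_poly A \<noteq> 0" by auto
  then have "finite {k. poly (char_poly A) k = 0}" by (rule poly_roots_finite)
  moreover have "{k. eigenvalue A k} = {k. poly (char_poly A) k = 0}"
    using eigenvalue_root_char_poly[OF A] by auto
  ultimately show ?thesis by simp
qed

lemma lmax_props:
  fixes A :: "real mat"
  assumes A: "A \<in> carrier_mat N N" and s: "transpose_mat A = A" and N: "0 < N"
  shows "eigenvalue A (lambda_max A) \<and> (\<forall>x \<in> carrier_vec N. x \<bullet> (A *\<^sub>v x) \<le> lambda_max A * (x \<bullet> x))"
proof -
  obtain k where k: "eigenvalue A k" "\<forall>x \<in> carrier_vec N. 1 * (x \<bullet> (A *\<^sub>v x)) \<le> 1 * k * (x \<bullet> x)"
    using rayleigh_ext[OF A s N, of 1] by auto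
  have fin: "finite {k. eigenvalue A k}" by (rule eig_finite[OF A])
  have ne: "{k. eigenvalue A k} \<noteq> {}" using k by auto
  have kle: "k \<le> lambda_max A" unfolding lambda_max_def using fin k by (intro Max_ge) auto
  have "eigenvalue A (lambda_max A)" unfolding lambda_max_def using Max_in[OF fin ne] by simp
  moreover have "x \<bullet> (A *\<^sub>v x) \<le> lambda_max A * (x \<bullet> x)" if "x \<in> carrier_vec N" for x
  proof -
    have "x \<bullet> (A *\<^sub>v x) \<le> k * (x \<bullet> x)" using k that by simp
    also have "\<dots> \<le> lambda_max A * (x \<bullet> x)" using kle sp_self_nonneg[of x] by (rule mult_right_mono)
    finally show ?thesis .
  qed
  ultimately show ?thesis by auto
qed

lemma lmin_props:
  fixes A :: "real mat"
  assumes A: "A \<in> carrier_mat N N" and s: "transpose_mat A = A" and N: "0 < N"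
  shows "eigenvalue A (lambda_min A) \<and> (\<forall>x \<in> carrier_vec N. lambda_min A * (x \<bullet> x) \<le> x \<bullet> (A *\<^sub>v x))"
proof -
  obtain k where k: "eigenvalue A k" "\<forall>x \<in> carrier_vec N. (-1) * (x \<bullet> (A *\<^sub>v x)) \<le> (-1) * k * (x \<bullet> x)"
    using rayleigh_ext[OF A s N, of "-1"] by auto
  have fin: "finite {k. eigenvalue A k}" by (rule eig_finite[OF A])
  have ne: "{k. eigenvalue A k} \<noteq> {}" using k by auto
  have kle: "lambda_min A \<le> k" unfolding lambda_min_def using fin k by (intro Min_le) auto
  have "eigenvalue A (lambda_min A)" unfolding lambda_min_def using Min_in[OF fin ne] by simp
  moreover have "lambda_min A * (x \<bullet> x) \<le> x \<bullet> (A *\<^sub>v x)" if "x \<in> carrier_vec N" for x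
  proof -
    have "lambda_min A * (x \<bullet> x) \<le> k * (x \<bullet> x)" using kle sp_self_nonneg[of x] by (rule mult_right_mono)
    also have "\<dots> \<le> x \<bullet> (A *\<^sub>v x)" using k that by simp
    finally show ?thesis .
  qed
  ultimately show ?thesis by auto
qed

definition posdef :: "nat \<Rightarrow> real mat \<Rightarrow> bool" where
  "posdef N A \<longleftrightarrow> (\<forall>x \<in> carrier_vec N. x \<noteq> 0\<^sub>v N \<longrightarrow> x \<bullet> (A *\<^sub>v x) > 0)"

lemma eig_pos:
  fixes A :: "real mat"
  assumes A: "A \<in> carrier_mat N N" and pd: "posdef N A" and e: "eigenvalue A k"
  shows "0 < k"
proof -
  obtain v where v: "v \<in> carrier_vec N" "v \<noteq> 0\<^sub>v N" "A *\<^sub>v v = k \<cdot>\<^sub>v v"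
    using e A unfolding eigenvalue_def eigenvector_def by auto
  have "0 < v \<bullet> (A *\<^sub>v v)" using pd v unfolding posdef_def by auto
  also have "v \<bullet> (A *\<^sub>v v) = k * (v \<bullet> v)" using v by simp
  finally have "0 < k * (v \<bullet> v)" .
  moreover have "0 \<le> v \<bullet> v" by (rule sp_self_nonneg)
  ultimately show ?thesis by (simp add: zero_less_mult_iff)
qed

lemma minv_props:
  fixes A :: "real mat"
  assumes A: "A \<in> carrier_mat N N" and pd: "posdef N A"
  shows "minv A \<in> carrier_mat N N \<and> A * minv A = 1\<^sub>m N \<and> minv A * A = 1\<^sub>m N"
proof -
  have "det A \<noteq> 0"
  proof
    assume "det A = 0"
    then obtain v where v: "v \<in> carrier_vec N" "v \<noteq> 0\<^sub>v N" "A *\<^sub>v v = 0\<^sub>v N"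
      using det_0_iff_vec_prod_zero_field[OF A] by auto
    then have "0 < v \<bullet> (A *\<^sub>v v)" using pd unfolding posdef_def by auto
    then show False using v by simp
  qed
  then have U: "A \<in> Units (ring_mat TYPE(real) N ())" by (rule det_non_zero_imp_unit[OF A])
  have "mat_inverse A \<noteq> None" using mat_inverse(1)[OF A, of "()"] U by blast
  then obtain B where B: "mat_inverse A = Some B" by auto
  from mat_inverse(2)[OF A B] show ?thesis using B by (simp add: minv_def)
qed


lemma real_delta_lemma:
  fixes d b c :: real
  assumes d: "0 \<le> d" and b: "0 \<le> b" and c: "0 \<le> c" "c \<le> 1"
    and h: "\<And>t. 2 * t * d \<le> (1 - c) * d + t^2 * b"
  shows "d \<le> (1 - c) * b"
proof (cases "c = 1")
  case True
  have "\<And>t. 0 \<le> t^2 * b - 2 * t * d" using h True by (simp add: algebra_simps)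
  then have "d = 0" using d by (rule quad_zero_lemma)
  then show ?thesis using True by simp
next
  case False
  then have cp: "0 < 1 - c" using c by auto
  have "2 * (1 - c) * d \<le> (1 - c) * d + (1 - c)^2 * b" using h[of "1 - c"] .
  then have "(1 - c) * d \<le> (1 - c) * ((1 - c) * b)" by (simp add: power2_eq_square algebra_simps)
  then show ?thesis using cp by simp
qed

lemma bil_add_mat:
  fixes M B :: "real mat"
  assumes "M \<in> carrier_mat N N" "B \<in> carrier_mat N N" "u \<in> carrier_vec N" "v \<in> carrier_vec N"
  shows "u \<bullet> ((M + B) *\<^sub>v v) = u \<bullet> (M *\<^sub>v v) + u \<bullet> (B *\<^sub>v v)"
  using assms by (simp add: add_mult_distrib_mat_vec scalar_prod_add_distrib[of _ N])

lemma core_ineqs: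
  fixes M B :: "real mat"
  assumes M: "M \<in> carrier_mat N N" and B: "B \<in> carrier_mat N N"
    and Ms: "transpose_mat M = M" and Bs: "transpose_mat B = B"
    and Mpsd: "\<And>x. x \<in> carrier_vec N \<Longrightarrow> 0 \<le> x \<bullet> (M *\<^sub>v x)"
    and Bpsd: "\<And>x. x \<in> carrier_vec N \<Longrightarrow> 0 \<le> x \<bullet> (B *\<^sub>v x)"
    and e: "e \<in> carrier_vec N" and y: "y \<in> carrier_vec N" and z: "z \<in> carrier_vec N"
    and My: "M *\<^sub>v y = e" and Mz: "(M + B) *\<^sub>v z = e"
  shows "e \<bullet> y - e \<bullet> z \<le> y \<bullet> (B *\<^sub>v y)"
    and "z \<bullet> (B *\<^sub>v z) \<le> e \<bullet> y - e \<bullet> z"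
    and "\<And>c. 0 \<le> c \<Longrightarrow> c \<le> 1 \<Longrightarrow>
          (\<And>v. v \<in> carrier_vec N \<Longrightarrow> c * (v \<bullet> ((M + B) *\<^sub>v v)) \<le> v \<bullet> (M *\<^sub>v v)) \<Longrightarrow>
          c * (y \<bullet> (B *\<^sub>v y)) \<le> e \<bullet> y - e \<bullet> z"
proof -
  define M' where "M' = M + B"
  have M': "M' \<in> carrier_mat N N" using M B by (simp add: M'_def)
  have M's: "transpose_mat M' = M'" using Ms Bs M B by (simp add: M'_def transpose_add)
  have M'psd: "0 \<le> x \<bullet> (M' *\<^sub>v x)" if "x \<in> carrier_vec N" for x
    using Mpsd[OF that] Bpsd[OF that] bil_add_mat[OF M B that that] by (simp add: M'_def)
  define d where "d = y - 1 \<cdot>\<^sub>v z"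
  have dc: "d \<in> carrier_vec N" using y z by (simp add: d_def)
  have ey: "e \<bullet> y = y \<bullet> e" "e \<bullet> z = z \<bullet> e" using e y z by (auto intro: comm_scalar_prod)
  have a1: "y \<bullet> (M *\<^sub>v y) = e \<bullet> y" using My ey by simp
  have a2: "z \<bullet> (M *\<^sub>v y) = e \<bullet> z" using My ey by simp
  have a2': "y \<bullet> (M *\<^sub>v z) = e \<bullet> z" using a2 bil_sym[OF M Ms y z] by simp
  have m3: "z \<bullet> (M' *\<^sub>v z) = e \<bullet> z" using Mz ey by (simp add: M'_def)
  have m2: "z \<bullet> (M' *\<^sub>v y) = e \<bullet> y" using bil_sym[OF M' M's z y] Mz ey by (simp add: M'_def)
  have s1: "u \<bullet> (M' *\<^sub>v v) = u \<bullet> (M *\<^sub>v v) + u \<bullet> (B *\<^sub>v v)"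
    if "u \<in> carrier_vec N" "v \<in> carrier_vec N" for u v
    using bil_add_mat[OF M B that] by (simp add: M'_def)
  have bs: "y \<bullet> (B *\<^sub>v z) = z \<bullet> (B *\<^sub>v y)" by (rule bil_sym[OF B Bs y z])
  have ms: "y \<bullet> (M *\<^sub>v z) = z \<bullet> (M *\<^sub>v y)" by (rule bil_sym[OF M Ms y z])
  have qM': "d \<bullet> (M' *\<^sub>v d) = y \<bullet> (M' *\<^sub>v y) - 2 * 1 * (z \<bullet> (M' *\<^sub>v y)) + 1^2 * (z \<bullet> (M' *\<^sub>v z))"
    unfolding d_def by (rule quad_expand[OF M' M's y z])
  have qM: "d \<bullet> (M *\<^sub>v d) = y \<bullet> (M *\<^sub>v y) - 2 * 1 * (z \<bullet> (M *\<^sub>v y)) + 1^2 * (z \<bullet> (M *\<^sub>v z))"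
    unfolding d_def by (rule quad_expand[OF M Ms y z])
  have qB: "d \<bullet> (B *\<^sub>v d) = y \<bullet> (B *\<^sub>v y) - 2 * 1 * (z \<bullet> (B *\<^sub>v y)) + 1^2 * (z \<bullet> (B *\<^sub>v z))"
    unfolding d_def by (rule quad_expand[OF B Bs y z])
  have syy: "y \<bullet> (M' *\<^sub>v y) = y \<bullet> (M *\<^sub>v y) + y \<bullet> (B *\<^sub>v y)" by (rule s1[OF y y])
  have szy: "z \<bullet> (M' *\<^sub>v y) = z \<bullet> (M *\<^sub>v y) + z \<bullet> (B *\<^sub>v y)" by (rule s1[OF z y])
  have szz: "z \<bullet> (M' *\<^sub>v z) = z \<bullet> (M *\<^sub>v z) + z \<bullet> (B *\<^sub>v z)" by (rule s1[OF z z])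
  have sdd: "d \<bullet> (M' *\<^sub>v d) = d \<bullet> (M *\<^sub>v d) + d \<bullet> (B *\<^sub>v d)" by (rule s1[OF dc dc])
  have P1: "0 \<le> d \<bullet> (M' *\<^sub>v d)" by (rule M'psd[OF dc])
  have P2: "0 \<le> d \<bullet> (M *\<^sub>v d)" by (rule Mpsd[OF dc])
  show "e \<bullet> y - e \<bullet> z \<le> y \<bullet> (B *\<^sub>v y)"
    using P1 qM' syy m2 m3 a1 by simp
  show "z \<bullet> (B *\<^sub>v z) \<le> e \<bullet> y - e \<bullet> z"
    using P2 qM a1 a2 m3 szz by simp
  fix c :: real
  assume c0: "0 \<le> c" and c1: "c \<le> 1"
    and cond: "\<And>v. v \<in> carrier_vec N \<Longrightarrow> c * (v \<bullet> ((M + B) *\<^sub>v v)) \<le> v \<bullet> (M *\<^sub>v v)"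
  have cd: "c * (d \<bullet> (M' *\<^sub>v d)) \<le> d \<bullet> (M *\<^sub>v d)" using cond[OF dc] by (simp add: M'_def)
  have yBd: "y \<bullet> (B *\<^sub>v d) = y \<bullet> (B *\<^sub>v y) - z \<bullet> (B *\<^sub>v y)"
  proof -
    have "B *\<^sub>v d = B *\<^sub>v y - B *\<^sub>v (1 \<cdot>\<^sub>v z)" unfolding d_def
      by (rule mult_minus_distrib_mat_vec[OF B y]) (use z in simp)
    then have "y \<bullet> (B *\<^sub>v d) = y \<bullet> (B *\<^sub>v y) - y \<bullet> (B *\<^sub>v z)"
      using B y z by (simp add: scalar_prod_minus_distrib[of _ N])
    then show ?thesis using bs by simp
  qed
  have key: "2 * t * (d \<bullet> (M' *\<^sub>v d)) \<le> (1 - c) * (d \<bullet> (M' *\<^sub>v d)) + t^2 * (y \<bullet> (B *\<^sub>v y))" for t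
  proof -
    have "0 \<le> (d - t \<cdot>\<^sub>v y) \<bullet> (B *\<^sub>v (d - t \<cdot>\<^sub>v y))" using Bpsd dc y by simp
    also have "\<dots> = d \<bullet> (B *\<^sub>v d) - 2 * t * (y \<bullet> (B *\<^sub>v d)) + t^2 * (y \<bullet> (B *\<^sub>v y))"
      by (rule quad_expand[OF B Bs dc y])
    finally have "0 \<le> d \<bullet> (B *\<^sub>v d) - 2 * t * (y \<bullet> (B *\<^sub>v d)) + t^2 * (y \<bullet> (B *\<^sub>v y))" .
    moreover have "y \<bullet> (B *\<^sub>v d) = d \<bullet> (M' *\<^sub>v d)"
      using yBd qM' syy szy szz m2 m3 a1 a2 by simp
    ultimately have "0 \<le> d \<bullet> (B *\<^sub>v d) - 2 * t * (d \<bullet> (M' *\<^sub>v d)) + t^2 * (y \<bullet> (B *\<^sub>v y))"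
      by simp
    moreover have "d \<bullet> (B *\<^sub>v d) \<le> (1 - c) * (d \<bullet> (M' *\<^sub>v d))"
      using cd sdd by (simp add: algebra_simps)
    ultimately show ?thesis by linarith
  qed
  have "d \<bullet> (M' *\<^sub>v d) \<le> (1 - c) * (y \<bullet> (B *\<^sub>v y))"
    by (rule real_delta_lemma[OF P1 Bpsd[OF y] c0 c1 key])
  moreover have "d \<bullet> (M' *\<^sub>v d) = y \<bullet> (B *\<^sub>v y) - (e \<bullet> y - e \<bullet> z)"
    using qM' syy m2 m3 a1 by simp
  ultimately show "c * (y \<bullet> (B *\<^sub>v y)) \<le> e \<bullet> y - e \<bullet> z" by (simp add: algebra_simps)
qed


lemma norm_lb:
  fixes M :: "real mat" and h w :: "real vec"
  assumes M: "M \<in> carrier_mat N N" and Ms: "transpose_mat M = M"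
    and up: "\<And>v. v \<in> carrier_vec N \<Longrightarrow> v \<bullet> (M *\<^sub>v v) \<le> La * (v \<bullet> v)"
    and psd: "\<And>v. v \<in> carrier_vec N \<Longrightarrow> 0 \<le> v \<bullet> (M *\<^sub>v v)"
    and La: "0 < La" and w: "w \<in> carrier_vec N" and h: "M *\<^sub>v w = h"
  shows "h \<bullet> h \<le> La^2 * (w \<bullet> w)"
proof -
  have hc: "h \<in> carrier_vec N" using h M w by auto
  have "0 \<le> (h - La \<cdot>\<^sub>v w) \<bullet> (M *\<^sub>v (h - La \<cdot>\<^sub>v w))" using psd hc w by simp
  also have "\<dots> = h \<bullet> (M *\<^sub>v h) - 2 * La * (w \<bullet> (M *\<^sub>v h)) + La^2 * (w \<bullet> (M *\<^sub>v w))"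
    by (rule quad_expand[OF M Ms hc w])
  also have "w \<bullet> (M *\<^sub>v h) = h \<bullet> h" using bil_sym[OF M Ms w hc] h by simp
  finally have "0 \<le> h \<bullet> (M *\<^sub>v h) - 2 * La * (h \<bullet> h) + La^2 * (w \<bullet> (M *\<^sub>v w))" .
  moreover have "h \<bullet> (M *\<^sub>v h) \<le> La * (h \<bullet> h)" by (rule up[OF hc])
  moreover have "La^2 * (w \<bullet> (M *\<^sub>v w)) \<le> La^2 * (La * (w \<bullet> w))"
    using up[OF w] by (intro mult_left_mono) auto
  ultimately have "La * (h \<bullet> h) \<le> La * (La^2 * (w \<bullet> w))" by (simp add: algebra_simps)
  then show ?thesis using La by simp
qed

lemma norm_ub:
  fixes M :: "real mat" and h v :: "real vec"
  assumes M: "M \<in> carrier_mat N N"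
    and lo: "\<And>v. v \<in> carrier_vec N \<Longrightarrow> la * (v \<bullet> v) \<le> v \<bullet> (M *\<^sub>v v)"
    and la: "0 < la" and v: "v \<in> carrier_vec N" and h: "M *\<^sub>v v = h"
  shows "la^2 * (v \<bullet> v) \<le> h \<bullet> h"
proof -
  have hc: "h \<in> carrier_vec N" using h M v by auto
  have I: "1\<^sub>m N \<in> carrier_mat N N" "transpose_mat (1\<^sub>m N) = (1\<^sub>m N :: real mat)" by auto
  have "0 \<le> (h - la \<cdot>\<^sub>v v) \<bullet> (1\<^sub>m N *\<^sub>v (h - la \<cdot>\<^sub>v v))" using hc v by (simp add: sp_self_nonneg)
  also have "\<dots> = h \<bullet> (1\<^sub>m N *\<^sub>v h) - 2 * la * (v \<bullet> (1\<^sub>m N *\<^sub>v h)) + la^2 * (v \<bullet> (1\<^sub>m N *\<^sub>v v))"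
    by (rule quad_expand[OF I hc v])
  finally have q: "0 \<le> h \<bullet> h - 2 * la * (v \<bullet> h) + la^2 * (v \<bullet> v)" using hc v by simp
  have "la * (v \<bullet> v) \<le> v \<bullet> h" using lo[OF v] h by simp
  then have "la * (la * (v \<bullet> v)) \<le> la * (v \<bullet> h)" using la by (intro mult_left_mono) auto
  then show ?thesis using q by (simp add: power2_eq_square algebra_simps)
qed

lemma trace_unit:
  fixes P :: "real mat"
  assumes P: "P \<in> carrier_mat N N"
  shows "mtrace P = (\<Sum>i<N. unit_vec N i \<bullet> (P *\<^sub>v unit_vec N i))"
proof -
  have "unit_vec N i \<bullet> (P *\<^sub>v unit_vec N i) = P $$ (i, i)" if "i < N" for i
  proof -
    have "unit_vec N i \<bullet> (P *\<^sub>v unit_vec N i) = (P *\<^sub>v unit_vec N i) $ i"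
      using that P by (simp add: scalar_prod_left_unit)
    also have "\<dots> = row P i \<bullet> unit_vec N i" using that P by simp
    also have "\<dots> = P $$ (i, i)" using that P by (simp add: scalar_prod_right_unit)
    finally show ?thesis .
  qed
  then show ?thesis unfolding mtrace_def using P by simp
qed

lemma sum_div_mod:
  fixes F :: "nat \<Rightarrow> nat \<Rightarrow> 'a :: comm_monoid_add"
  shows "(\<Sum>a<l * m. F (a div m) (a mod m)) = (\<Sum>t<l. \<Sum>i<m. F t i)"
proof (induction l)
  case 0 then show ?case by simp
next
  case (Suc l)
  have split: "{..<Suc l * m} = {..<l * m} \<union> {l * m..<l * m + m}" by auto
  have disj: "{..<l * m} \<inter> {l * m..<l * m + m} = {}" by auto
  have "(\<Sum>a<Suc l * m. F (a div m) (a mod m)) =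
      (\<Sum>a<l * m. F (a div m) (a mod m)) + (\<Sum>a\<in>{l * m..<l * m + m}. F (a div m) (a mod m))"
    unfolding split by (rule sum.union_disjoint) (use disj in auto)
  also have "(\<Sum>a\<in>{l * m..<l * m + m}. F (a div m) (a mod m)) = (\<Sum>i<m. F l i)"
  proof -
    have "(\<Sum>a\<in>{l * m..<l * m + m}. F (a div m) (a mod m)) = (\<Sum>i\<in>{0..<m}. F ((i + l * m) div m) ((i + l * m) mod m))"
      using sum.shift_bounds_nat_ivl[of "\<lambda>a. F (a div m) (a mod m)" 0 "l * m" m] by (simp add: add.commute)
    also have "\<dots> = (\<Sum>i\<in>{0..<m}. F l i)"
      by (rule sum.cong) auto
    finally show ?thesis by (simp add: lessThan_atLeast0)
  qed
  finally show ?case using Suc by simp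
qed

definition blk :: "nat \<Rightarrow> nat \<Rightarrow> real vec \<Rightarrow> real vec" where
  "blk n t x = vec n (\<lambda>i. x $ (t * n + i))"

lemma blk_carrier[simp]: "blk n t x \<in> carrier_vec n"
  by (simp add: blk_def)

lemma blk_sp:
  assumes "v \<in> carrier_vec n"
  shows "blk n t x \<bullet> v = (\<Sum>i<n. x $ (t * n + i) * v $ i)"
proof -
  have "blk n t x \<bullet> v = (\<Sum>i<n. blk n t x $ i * v $ i)" by (rule sp_sum[OF blk_carrier assms])
  also have "\<dots> = (\<Sum>i<n. x $ (t * n + i) * v $ i)" by (rule sum.cong) (auto simp: blk_def)
  finally show ?thesis .
qed

lemma sym_posdef_psd:
  assumes "sym_posdef n X" "x \<in> carrier_vec n"
  shows "0 \<le> x \<bullet> (X *\<^sub>v x)"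
  using assms unfolding sym_posdef_def
  by (cases "x = 0\<^sub>v n") (auto intro: less_imp_le simp: scalar_prod_left_zero)

lemma Z_carrier: "Z_mat n l X0 W \<in> carrier_mat (n * l) (n * l)"
  by (simp add: Z_mat_def)

lemma Z_index:
  assumes "r < n * l" "c < n * l"
  shows "Z_mat n l X0 W $$ (r, c) =
    (if r div n = c div n then (if r div n = 0 then X0 else W) $$ (r mod n, c mod n) else 0)"
  using assms by (simp add: Z_mat_def)

lemma Z_sym:
  assumes X0: "sym_posdef n X0" and W: "sym_posdef n W"
  shows "transpose_mat (Z_mat n l X0 W) = Z_mat n l X0 W"
proof (rule eq_matI)
  fix i j assume i: "i < dim_row (Z_mat n l X0 W)" and j: "j < dim_col (Z_mat n l X0 W)"
  then have i': "i < n * l" and j': "j < n * l" by (auto simp: Z_mat_def)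
  have np: "0 < n" using i' by (cases n) auto
  have im: "i mod n < n" "j mod n < n" using np by auto
  have X0s: "X0 $$ (a, b) = X0 $$ (b, a)" if "a < n" "b < n" for a b
    using X0 that unfolding sym_posdef_def by (metis carrier_matD(1) carrier_matD(2) index_transpose_mat(1))
  have Ws: "W $$ (a, b) = W $$ (b, a)" if "a < n" "b < n" for a b
    using W that unfolding sym_posdef_def by (metis carrier_matD(1) carrier_matD(2) index_transpose_mat(1))
  show "transpose_mat (Z_mat n l X0 W) $$ (i, j) = Z_mat n l X0 W $$ (i, j)"
    using i' j' im X0s Ws by (auto simp: Z_mat_def)
qed (auto simp: Z_mat_def)

lemma Z_mv:
  assumes X0: "X0 \<in> carrier_mat n n" and W: "W \<in> carrier_mat n n"
    and x: "x \<in> carrier_vec (n * l)" and r: "r < n * l"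
  shows "(Z_mat n l X0 W *\<^sub>v x) $ r =
    ((if r div n = 0 then X0 else W) *\<^sub>v blk n (r div n) x) $ (r mod n)"
proof -
  have np: "0 < n" using r by (cases n) auto
  have rl: "r div n < l" using r by (simp add: less_mult_imp_div_less mult.commute)
  define X where "X = (if r div n = 0 then X0 else W)"
  have Xc: "X \<in> carrier_mat n n" using X0 W by (simp add: X_def)
  have "(Z_mat n l X0 W *\<^sub>v x) $ r = (\<Sum>c<n * l. Z_mat n l X0 W $$ (r, c) * x $ c)"
    using r x by (simp add: scalar_prod_def row_def Z_mat_def lessThan_atLeast0)
  also have "\<dots> = (\<Sum>c<l * n. (if r div n = c div n then X $$ (r mod n, c mod n) else 0) * x $ ((c div n) * n + c mod n))"
    by (rule sum.cong) (auto simp: Z_index[OF r] X_def mult.commute)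
  also have "\<dots> = (\<Sum>t<l. \<Sum>i<n. (if r div n = t then X $$ (r mod n, i) else 0) * x $ (t * n + i))"
    by (rule sum_div_mod[of "\<lambda>t i. (if r div n = t then X $$ (r mod n, i) else 0) * x $ (t * n + i)"])
  also have "\<dots> = (\<Sum>t<l. if t = r div n then (\<Sum>i<n. X $$ (r mod n, i) * x $ (t * n + i)) else 0)"
    by (rule sum.cong) auto
  also have "\<dots> = (\<Sum>i<n. X $$ (r mod n, i) * x $ ((r div n) * n + i))"
    using rl by (simp add: sum.delta)
  also have "\<dots> = (X *\<^sub>v blk n (r div n) x) $ (r mod n)"
    using Xc np by (simp add: scalar_prod_def row_def blk_def lessThan_atLeast0)
  finally show ?thesis by (simp add: X_def)
qed

lemma Z_qf:
  assumes X0: "X0 \<in> carrier_mat n n" and W: "W \<in> carrier_mat n n"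
    and x: "x \<in> carrier_vec (n * l)"
  shows "x \<bullet> (Z_mat n l X0 W *\<^sub>v x) =
    (\<Sum>t<l. blk n t x \<bullet> ((if t = 0 then X0 else W) *\<^sub>v blk n t x))"
proof -
  have "x \<bullet> (Z_mat n l X0 W *\<^sub>v x) = (\<Sum>r<n * l. x $ r * (Z_mat n l X0 W *\<^sub>v x) $ r)"
    using x by (simp add: scalar_prod_def lessThan_atLeast0 Z_mat_def)
  also have "\<dots> = (\<Sum>r<l * n. x $ ((r div n) * n + r mod n) *
      ((if r div n = 0 then X0 else W) *\<^sub>v blk n (r div n) x) $ (r mod n))"
    by (rule sum.cong) (auto simp: Z_mv[OF X0 W x] mult.commute)
  also have "\<dots> = (\<Sum>t<l. \<Sum>i<n. x $ (t * n + i) * ((if t = 0 then X0 else W) *\<^sub>v blk n t x) $ i)"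
    by (rule sum_div_mod[of "\<lambda>t i. x $ (t * n + i) * ((if t = 0 then X0 else W) *\<^sub>v blk n t x) $ i"])
  also have "\<dots> = (\<Sum>t<l. blk n t x \<bullet> ((if t = 0 then X0 else W) *\<^sub>v blk n t x))"
  proof (rule sum.cong)
    fix t assume "t \<in> {..<l}"
    have c: "(if t = 0 then X0 else W) *\<^sub>v blk n t x \<in> carrier_vec n" using X0 W by auto
    show "(\<Sum>i<n. x $ (t * n + i) * ((if t = 0 then X0 else W) *\<^sub>v blk n t x) $ i) =
      blk n t x \<bullet> ((if t = 0 then X0 else W) *\<^sub>v blk n t x)"
      by (rule blk_sp[OF c, symmetric])
  qed simp
  finally show ?thesis .
qed

lemma Z_posdef:
  assumes X0: "sym_posdef n X0" and W: "sym_posdef n W"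
  shows "posdef (n * l) (Z_mat n l X0 W)"
  unfolding posdef_def
proof (intro ballI impI)
  fix x :: "real vec" assume x: "x \<in> carrier_vec (n * l)" and nz: "x \<noteq> 0\<^sub>v (n * l)"
  have X0c: "X0 \<in> carrier_mat n n" and Wc: "W \<in> carrier_mat n n" using X0 W by (auto simp: sym_posdef_def)
  have Xt: "sym_posdef n (if t = 0 then X0 else W)" for t using X0 W by simp
  obtain r where r: "r < n * l" "x $ r \<noteq> 0"
    using nz x by (metis carrier_vecD eq_vecI index_zero_vec(1) index_zero_vec(2))
  have np: "0 < n" using r by (cases n) auto
  have rl: "r div n < l" using r by (simp add: less_mult_imp_div_less mult.commute)
  have "blk n (r div n) x $ (r mod n) = x $ r" using np by (simp add: blk_def)
  then have bnz: "blk n (r div n) x \<noteq> 0\<^sub>v n" using r np by (metis index_zero_vec(1) mod_less_divisor)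
  have "0 < blk n (r div n) x \<bullet> ((if r div n = 0 then X0 else W) *\<^sub>v blk n (r div n) x)"
    using Xt[of "r div n"] bnz unfolding sym_posdef_def by auto
  also have "\<dots> \<le> (\<Sum>t<l. blk n t x \<bullet> ((if t = 0 then X0 else W) *\<^sub>v blk n t x))"
    by (rule member_le_sum[of "r div n"]) (use rl sym_posdef_psd[OF X0] sym_posdef_psd[OF W] in auto)
  also have "\<dots> = x \<bullet> (Z_mat n l X0 W *\<^sub>v x)" using Z_qf[OF X0c Wc x] by simp
  finally show "0 < x \<bullet> (Z_mat n l X0 W *\<^sub>v x)" .
qed


lemma inv_sym:
  fixes Z L :: "real mat"
  assumes Z: "Z \<in> carrier_mat N N" and L: "L \<in> carrier_mat N N" and Zs: "transpose_mat Z = Z"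
    and ZL: "Z * L = 1\<^sub>m N" and LZ: "L * Z = 1\<^sub>m N"
  shows "transpose_mat L = L"
proof -
  have Lt: "transpose_mat L \<in> carrier_mat N N" using L by simp
  have "transpose_mat L * Z = transpose_mat L * transpose_mat Z" using Zs by simp
  also have "\<dots> = transpose_mat (Z * L)" using Z L by (simp add: transpose_mult)
  also have "\<dots> = 1\<^sub>m N" using ZL by simp
  finally have h: "transpose_mat L * Z = 1\<^sub>m N" .
  have "transpose_mat L = transpose_mat L * (Z * L)" using ZL Lt by simp
  also have "\<dots> = (transpose_mat L * Z) * L" using assoc_mult_mat[OF Lt Z L] by simp
  also have "\<dots> = L" using h L by simp
  finally show ?thesis .
qed

lemma inv_posdef:
  fixes Z L :: "real mat"
  assumes Z: "Z \<in> carrier_mat N N" and L: "L \<in> carrier_mat N N" and Zs: "transpose_mat Z = Z"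
    and ZL: "Z * L = 1\<^sub>m N" and pd: "posdef N Z"
  shows "posdef N L"
  unfolding posdef_def
proof (intro ballI impI)
  fix x :: "real vec" assume x: "x \<in> carrier_vec N" and nz: "x \<noteq> 0\<^sub>v N"
  define y where "y = L *\<^sub>v x"
  have y: "y \<in> carrier_vec N" using L x by (simp add: y_def)
  have "(Z * L) *\<^sub>v x = Z *\<^sub>v y" unfolding y_def using Z L x by simp
  then have Zy: "Z *\<^sub>v y = x" using ZL x by simp
  have ynz: "y \<noteq> 0\<^sub>v N"
  proof
    assume "y = 0\<^sub>v N"
    then have "Z *\<^sub>v y = 0\<^sub>v N" using Z by (intro eq_vecI) auto
    then show False using Zy nz by simp
  qed
  have "x \<bullet> (L *\<^sub>v x) = (Z *\<^sub>v y) \<bullet> y" using Zy y_def by simp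
  also have "\<dots> = y \<bullet> (Z *\<^sub>v y)" using Z y by (intro comm_scalar_prod[of _ N]) auto
  finally show "0 < x \<bullet> (L *\<^sub>v x)" using pd y ynz unfolding posdef_def by auto
qed

lemma L_props:
  fixes l :: nat
  assumes X0: "sym_posdef n X0" and W: "sym_posdef n W"
  defines "L \<equiv> L_mat n l X0 W"
  shows "L \<in> carrier_mat (n * l) (n * l) \<and> transpose_mat L = L \<and> posdef (n * l) L"
proof -
  have X0c: "X0 \<in> carrier_mat n n" and Wc: "W \<in> carrier_mat n n" using X0 W by (auto simp: sym_posdef_def)
  note Zc = Z_carrier[of n l X0 W]
  note Zs = Z_sym[OF X0 W, of l]
  note Zpd = Z_posdef[OF X0 W, of l]
  have m: "L \<in> carrier_mat (n * l) (n * l) \<and> Z_mat n l X0 W * L = 1\<^sub>m (n * l) \<and> L * Z_mat n l X0 W = 1\<^sub>m (n * l)"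
    unfolding L_def L_mat_def by (rule minv_props[OF Zc Zpd])
  then show ?thesis using inv_sym[OF Zc _ Zs] inv_posdef[OF Zc _ Zs _ Zpd] by auto
qed

lemma sum_sorted_nth_x:
  assumes "finite S"
  shows "(\<Sum>i<card S. H (sorted_list_of_set S ! i)) = sum H S"
proof -
  define xs where "xs = sorted_list_of_set S"
  have d: "distinct xs" and st: "set xs = S" and len: "length xs = card S"
    using assms by (auto simp: xs_def)
  have "sum H S = sum_list (map H xs)" using d st by (metis sum.distinct_set_conv_list)
  also have "\<dots> = (\<Sum>i<length xs. H (xs ! i))"
    by (simp add: sum_list_sum_nth lessThan_atLeast0)
  finally show ?thesis using len xs_def by simp
qed

lemma kron_carrier:
  assumes "M \<in> carrier_mat a b"
  shows "kron_eye l M \<in> carrier_mat (l * a) (l * b)"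
  using assms by (simp add: kron_eye_def)

lemma kron_index:
  assumes "M \<in> carrier_mat a b" "r < l * a" "c < l * b"
  shows "kron_eye l M $$ (r, c) = (if r div a = c div b then M $$ (r mod a, c mod b) else 0)"
  using assms by (simp add: kron_eye_def)

lemma sel_carrier: "sel_mat p S \<in> carrier_mat (card S) p"
  by (simp add: sel_mat_def)

lemma sel_index:
  assumes "i < card S" "j < p"
  shows "sel_mat p S $$ (i, j) = (if j = sorted_list_of_set S ! i then 1 else 0)"
  using assms by (simp add: sel_mat_def)

lemma sorted_nth_props:
  fixes p :: nat and S :: "nat set"
  assumes S: "S \<subseteq> {..<p}" and i: "i < card S"
  shows "sorted_list_of_set S ! i \<in> S" "sorted_list_of_set S ! i < p"
proof -
  have fin: "finite S" by (rule finite_subset[OF S]) simp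
  have "sorted_list_of_set S ! i \<in> set (sorted_list_of_set S)"
    using i fin by (intro nth_mem) simp
  then show "sorted_list_of_set S ! i \<in> S" using fin by simp
  then show "sorted_list_of_set S ! i < p" using S by auto
qed

lemma sorted_nth_inj:
  fixes p :: nat and S :: "nat set"
  assumes S: "S \<subseteq> {..<p}" and i: "i < card S" and j: "j < card S"
  shows "(sorted_list_of_set S ! i = sorted_list_of_set S ! j) = (i = j)"
proof -
  have fin: "finite S" by (rule finite_subset[OF S]) simp
  show ?thesis using fin i j by (intro nth_eq_iff_index_eq) auto
qed

lemma selC_index:
  fixes C :: "real mat"
  assumes S: "S \<subseteq> {..<p}" and C: "C \<in> carrier_mat p n" and i: "i < card S" and k: "k < n"
  shows "(sel_mat p S * C) $$ (i, k) = C $$ (sorted_list_of_set S ! i, k)"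
proof -
  define a where "a = sorted_list_of_set S ! i"
  have ap: "a < p" using sorted_nth_props[OF S i] by (simp add: a_def)
  have "(sel_mat p S * C) $$ (i, k) = (\<Sum>j = 0..<p. sel_mat p S $$ (i, j) * C $$ (j, k))"
    using i k C by (simp add: sel_mat_def scalar_prod_def)
  also have "\<dots> = (\<Sum>j = 0..<p. if j = a then C $$ (j, k) else 0)"
    by (rule sum.cong) (auto simp: sel_index[OF i] a_def)
  also have "\<dots> = C $$ (a, k)" using ap by (simp add: sum.delta)
  finally show ?thesis by (simp add: a_def)
qed

lemma selV_index:
  assumes S: "S \<subseteq> {..<p}" and i: "i < card S" and i': "i' < card S"
  shows "(sel_mat p S * V_mat p sigma * transpose_mat (sel_mat p S)) $$ (i, i') =
    (if i = i' then (sigma (sorted_list_of_set S ! i))^2 else 0)"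
proof -
  define xs where "xs = sorted_list_of_set S"
  have ap: "xs ! i < p" "xs ! i' < p" using sorted_nth_props[OF S] i i' by (auto simp: xs_def)
  have V: "V_mat p sigma \<in> carrier_mat p p" by (simp add: V_mat_def)
  have sV: "(sel_mat p S * V_mat p sigma) $$ (i, j) = (if j = xs ! i then (sigma (xs ! i))^2 else 0)"
    if j: "j < p" for j
  proof -
    have "(sel_mat p S * V_mat p sigma) $$ (i, j) = (\<Sum>k = 0..<p. sel_mat p S $$ (i, k) * V_mat p sigma $$ (k, j))"
      using i j V by (simp add: sel_mat_def scalar_prod_def)
    also have "\<dots> = (\<Sum>k = 0..<p. if k = xs ! i then V_mat p sigma $$ (k, j) else 0)"
      by (rule sum.cong) (auto simp: sel_index[OF i] xs_def)
    also have "\<dots> = V_mat p sigma $$ (xs ! i, j)" using ap by (simp add: sum.delta)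
    finally show ?thesis using ap j by (auto simp: V_mat_def)
  qed
  have "(sel_mat p S * V_mat p sigma * transpose_mat (sel_mat p S)) $$ (i, i') =
      (\<Sum>j = 0..<p. (sel_mat p S * V_mat p sigma) $$ (i, j) * transpose_mat (sel_mat p S) $$ (j, i'))"
    using i i' V by (simp add: sel_mat_def scalar_prod_def)
  also have "\<dots> = (\<Sum>j = 0..<p. if j = xs ! i then (if xs ! i = xs ! i' then (sigma (xs ! i))^2 else 0) else 0)"
  proof (rule sum.cong)
    fix j assume "j \<in> {0..<p}"
    then have j: "j < p" by simp
    have sT: "transpose_mat (sel_mat p S) $$ (j, i') = sel_mat p S $$ (i', j)"
      using i' j by (simp add: sel_mat_def)
    show "(sel_mat p S * V_mat p sigma) $$ (i, j) * transpose_mat (sel_mat p S) $$ (j, i') =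
      (if j = xs ! i then (if xs ! i = xs ! i' then (sigma (xs ! i))^2 else 0) else 0)"
      unfolding sT sV[OF j] sel_index[OF i' j] xs_def by auto
  qed simp
  also have "\<dots> = (if xs ! i = xs ! i' then (sigma (xs ! i))^2 else 0)" using ap by (simp add: sum.delta)
  finally show ?thesis using sorted_nth_inj[OF S i i'] by (simp add: xs_def)
qed


definition cv :: "nat \<Rightarrow> nat \<Rightarrow> real mat \<Rightarrow> nat \<Rightarrow> nat \<Rightarrow> real vec" where
  "cv n l C j t = vec (n * l) (\<lambda>b. if b div n = t then C $$ (j, b mod n) else 0)"

definition hv :: "nat \<Rightarrow> nat \<Rightarrow> real mat \<Rightarrow> real mat \<Rightarrow> (nat \<Rightarrow> real) \<Rightarrow> nat \<Rightarrow> nat \<Rightarrow> real vec" where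
  "hv n l A C sigma j t = (1 / sigma j) \<cdot>\<^sub>v (transpose_mat (Phi_mat n l A) *\<^sub>v cv n l C j t)"

lemma Phi_carrier: "Phi_mat n l A \<in> carrier_mat (n * l) (n * l)"
  by (simp add: Phi_mat_def)

lemma hv_carrier[simp]: "hv n l A C sigma j t \<in> carrier_vec (n * l)"
proof -
  have "transpose_mat (Phi_mat n l A) \<in> carrier_mat (n * l) (n * l)" using Phi_carrier by simp
  moreover have "cv n l C j t \<in> carrier_vec (n * l)" by (simp add: cv_def)
  ultimately show ?thesis unfolding hv_def by simp
qed

lemma hv_sp:
  assumes u: "u \<in> carrier_vec (n * l)"
  shows "hv n l A C sigma j t \<bullet> u = (1 / sigma j) * (cv n l C j t \<bullet> (Phi_mat n l A *\<^sub>v u))"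
proof -
  have cvc: "cv n l C j t \<in> carrier_vec (n * l)" by (simp add: cv_def)
  have "hv n l A C sigma j t \<bullet> u = (1 / sigma j) * ((transpose_mat (Phi_mat n l A) *\<^sub>v cv n l C j t) \<bullet> u)"
    unfolding hv_def using u cvc Phi_carrier[of n l A] by simp
  also have "(transpose_mat (Phi_mat n l A) *\<^sub>v cv n l C j t) \<bullet> u = cv n l C j t \<bullet> (Phi_mat n l A *\<^sub>v u)"
    by (rule transpose_vec_mult_scalar[OF Phi_carrier u cvc])
  finally show ?thesis .
qed

lemma U_bil:
  fixes A C :: "real mat" and sigma :: "nat \<Rightarrow> real" and S :: "nat set" and u v :: "real vec"
  assumes n: "0 < n" and C: "C \<in> carrier_mat p n"
    and sig: "\<forall>i<p. sigma i > 0" and S: "S \<subseteq> {..<p}"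
    and u: "u \<in> carrier_vec (n * l)" and v: "v \<in> carrier_vec (n * l)"
  shows "U_mat n p l A C sigma S \<in> carrier_mat (n * l) (n * l) \<and>
    u \<bullet> (U_mat n p l A C sigma S *\<^sub>v v) =
      (\<Sum>j\<in>S. \<Sum>t<l. (hv n l A C sigma j t \<bullet> u) * (hv n l A C sigma j t \<bullet> v))"
proof (cases "S = {}")
  case True
  have "0\<^sub>m (n * l) (n * l) *\<^sub>v v = 0\<^sub>v (n * l)"
  proof (rule eq_vecI)
    fix i assume "i < dim_vec (0\<^sub>v (n * l))"
    then have i: "i < n * l" by simp
    have "row (0\<^sub>m (n * l) (n * l)) i = 0\<^sub>v (n * l)" using i by (intro eq_vecI) auto
    then show "(0\<^sub>m (n * l) (n * l) *\<^sub>v v) $ i = 0\<^sub>v (n * l) $ i" using i v by simp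
  qed simp
  then show ?thesis using True u v by (simp add: U_mat_def)
next
  case False
  have fin: "finite S" by (rule finite_subset[OF S]) simp
  define m where "m = card S"
  have m0: "0 < m" using False fin by (simp add: m_def card_gt_0_iff)
  define xs where "xs = sorted_list_of_set S"
  have xsp: "xs ! i < p" "xs ! i \<in> S" if "i < m" for i
    using sorted_nth_props[OF S] that by (auto simp: xs_def m_def)
  define selC where "selC = sel_mat p S * C"
  have selCc: "selC \<in> carrier_mat m n" using mult_carrier_mat[OF sel_carrier C] by (simp add: selC_def m_def)
  define K where "K = kron_eye l selC"
  have Kc: "K \<in> carrier_mat (l * m) (n * l)"
    using kron_carrier[OF selCc, of l] by (simp add: K_def mult.commute)
  define Ph where "Ph = Phi_mat n l A"
  have Phc: "Ph \<in> carrier_mat (n * l) (n * l)" by (simp add: Ph_def Phi_carrier)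
  define G where "G = K * Ph"
  have Gc: "G \<in> carrier_mat (l * m) (n * l)" using Kc Phc by (simp add: G_def)
  have GE: "G_mat n p l A C S = G" by (simp add: G_mat_def G_def K_def selC_def Ph_def)
  have rowK: "row K a = cv n l C (xs ! (a mod m)) (a div m)" if a: "a < l * m" for a
  proof (rule eq_vecI)
    show "dim_vec (row K a) = dim_vec (cv n l C (xs ! (a mod m)) (a div m))"
      using Kc by (simp add: cv_def)
    fix b assume "b < dim_vec (cv n l C (xs ! (a mod m)) (a div m))"
    then have b: "b < n * l" by (simp add: cv_def)
    have b': "b < l * n" using b by (simp add: mult.commute)
    have am: "a mod m < m" using m0 by simp
    have bn: "b mod n < n" using n by simp
    have "row K a $ b = K $$ (a, b)" using Kc a b by simp
    also have "\<dots> = (if a div m = b div n then selC $$ (a mod m, b mod n) else 0)"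
      unfolding K_def by (rule kron_index[OF selCc a b'])
    also have "\<dots> = cv n l C (xs ! (a mod m)) (a div m) $ b"
      using b selC_index[OF S C _ bn, of "a mod m"] am
      by (auto simp: cv_def selC_def xs_def m_def)
    finally show "row K a $ b = cv n l C (xs ! (a mod m)) (a div m) $ b" .
  qed
  have Gu: "(G *\<^sub>v w) $ a = cv n l C (xs ! (a mod m)) (a div m) \<bullet> (Ph *\<^sub>v w)"
    if a: "a < l * m" and w: "w \<in> carrier_vec (n * l)" for a w
  proof -
    have "G *\<^sub>v w = K *\<^sub>v (Ph *\<^sub>v w)" unfolding G_def using Kc Phc w by simp
    then show ?thesis using a Kc rowK[OF a] by simp
  qed
  define VSm where "VSm = sel_mat p S * V_mat p sigma * transpose_mat (sel_mat p S)"
  have Vc: "V_mat p sigma \<in> carrier_mat p p" by (simp add: V_mat_def)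
  have VSmc: "VSm \<in> carrier_mat m m"
    using mult_carrier_mat[OF mult_carrier_mat[OF sel_carrier Vc] transpose_carrier_mat[THEN iffD2, OF sel_carrier]]
    by (simp add: VSm_def m_def)
  define VS where "VS = kron_eye l VSm"
  have VSc: "VS \<in> carrier_mat (l * m) (l * m)" using kron_carrier[OF VSmc] by (simp add: VS_def)
  have VSE: "VS_mat p l sigma S = VS" by (simp add: VS_mat_def VS_def VSm_def)
  define sg where "sg a = (sigma (xs ! (a mod m)))^2" for a
  have sgp: "sg a > 0" for a
  proof -
    have "sigma (xs ! (a mod m)) > 0" using sig xsp[of "a mod m"] m0 by auto
    then show ?thesis by (simp add: sg_def)
  qed
  have sgn: "sg x \<noteq> 0" for x using sgp[of x] by simp
  have VSi: "VS $$ (a, b) = (if a = b then sg a else 0)" if "a < l * m" "b < l * m" for a b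
  proof -
    have am: "a mod m < card S" "b mod m < card S" using m0 by (auto simp: m_def[symmetric])
    have "VS $$ (a, b) = (if a div m = b div m then VSm $$ (a mod m, b mod m) else 0)"
      unfolding VS_def by (rule kron_index[OF VSmc that])
    also have "\<dots> = (if a div m = b div m \<and> a mod m = b mod m then sg a else 0)"
    proof -
      have am': "a mod card S < card S" "b mod card S < card S" using am by (auto simp: m_def)
      have e: "VSm $$ (a mod m, b mod m) = (if a mod m = b mod m then sg a else 0)"
        unfolding VSm_def sg_def xs_def m_def using selV_index[OF S am'] by simp
      then show ?thesis by auto
    qed
    also have "(a div m = b div m \<and> a mod m = b mod m) = (a = b)"
      by (metis div_mult_mod_eq)
    finally show ?thesis .
  qed
  define D where "D = mat (l * m) (l * m) (\<lambda>(a, b). if a = b then 1 / sg a else 0)"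
  have Dc: "D \<in> carrier_mat (l * m) (l * m)" by (simp add: D_def)
  have VSD: "VS * D = 1\<^sub>m (l * m)"
  proof (rule eq_matI)
    fix a b assume "a < dim_row (1\<^sub>m (l * m))" "b < dim_col (1\<^sub>m (l * m))"
    then have a: "a < l * m" and b: "b < l * m" by auto
    have "(VS * D) $$ (a, b) = (\<Sum>c = 0..<l * m. VS $$ (a, c) * D $$ (c, b))"
      using a b VSc Dc by (simp add: scalar_prod_def)
    also have "\<dots> = (\<Sum>c = 0..<l * m. if c = a then (if a = b then 1 else 0) else 0)"
      by (rule sum.cong) (use a b sgn in \<open>auto simp: VSi D_def\<close>)
    also have "\<dots> = (if a = b then 1 else 0)" using a by (simp add: sum.delta')
    finally show "(VS * D) $$ (a, b) = 1\<^sub>m (l * m) $$ (a, b)" using a b by simp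
  qed (use VSc Dc in auto)
  have "det VS * det D = 1"
    using det_mult[OF VSc Dc] VSD by simp
  then have "det VS \<noteq> 0" by auto
  then have Un: "VS \<in> Units (ring_mat TYPE(real) (l * m) ())" by (rule det_non_zero_imp_unit[OF VSc])
  have "mat_inverse VS \<noteq> None" using mat_inverse(1)[OF VSc, of "()"] Un by blast
  then obtain B where B: "mat_inverse VS = Some B" by auto
  from mat_inverse(2)[OF VSc B] have Bc: "B \<in> carrier_mat (l * m) (l * m)" and BV: "B * VS = 1\<^sub>m (l * m)" by auto
  have "B = B * (VS * D)" using VSD Bc by simp
  also have "\<dots> = (B * VS) * D" using assoc_mult_mat[OF Bc VSc Dc] by simp
  also have "\<dots> = D" using BV Dc by simp
  finally have minvD: "minv VS = D" using B by (simp add: minv_def)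
  have UE: "U_mat n p l A C sigma S = transpose_mat G * D * G"
    using False by (simp add: U_mat_def GE VSE minvD)
  have GTc: "transpose_mat G \<in> carrier_mat (n * l) (l * m)" using Gc by simp
  have Uc: "U_mat n p l A C sigma S \<in> carrier_mat (n * l) (n * l)" unfolding UE using GTc Dc Gc by simp
  have Gvc: "G *\<^sub>v v \<in> carrier_vec (l * m)" "G *\<^sub>v u \<in> carrier_vec (l * m)" using Gc u v by auto
  have DGv: "D *\<^sub>v (G *\<^sub>v v) \<in> carrier_vec (l * m)" using Dc Gvc by simp
  have "u \<bullet> (U_mat n p l A C sigma S *\<^sub>v v) = u \<bullet> (transpose_mat G *\<^sub>v (D *\<^sub>v (G *\<^sub>v v)))"
  proof -
    have DG: "D * G \<in> carrier_mat (l * m) (n * l)" using Dc Gc by simp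
    have "(transpose_mat G * D * G) = transpose_mat G * (D * G)" using GTc Dc Gc by simp
    then have "(transpose_mat G * D * G) *\<^sub>v v = transpose_mat G *\<^sub>v ((D * G) *\<^sub>v v)"
      using GTc DG v by simp
    also have "(D * G) *\<^sub>v v = D *\<^sub>v (G *\<^sub>v v)" using Dc Gc v by simp
    finally show ?thesis unfolding UE by simp
  qed
  also have "\<dots> = (G *\<^sub>v u) \<bullet> (D *\<^sub>v (G *\<^sub>v v))"
    using transpose_vec_mult_scalar[OF GTc DGv u] by simp
  also have "\<dots> = (\<Sum>a<l * m. (G *\<^sub>v u) $ a * ((G *\<^sub>v v) $ a / sg a))"
  proof -
    have Dw: "(D *\<^sub>v w) $ a = w $ a / sg a" if "a < l * m" "w \<in> carrier_vec (l * m)" for a w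
    proof -
      have "(D *\<^sub>v w) $ a = (\<Sum>c = 0..<l * m. D $$ (a, c) * w $ c)"
        using that Dc by (simp add: scalar_prod_def)
      also have "\<dots> = (\<Sum>c = 0..<l * m. if c = a then w $ a / sg a else 0)"
        by (rule sum.cong) (use that in \<open>auto simp: D_def\<close>)
      also have "\<dots> = w $ a / sg a" using that by (simp add: sum.delta')
      finally show ?thesis .
    qed
    have "(D *\<^sub>v (G *\<^sub>v v)) $ a = (G *\<^sub>v v) $ a / sg a" if "a < l * m" for a
      by (rule Dw[OF that Gvc(1)])
    then show ?thesis using sp_sum[OF Gvc(2) DGv] by simp
  qed
  also have "\<dots> = (\<Sum>a<l * m. (hv n l A C sigma (xs ! (a mod m)) (a div m) \<bullet> u) *
                               (hv n l A C sigma (xs ! (a mod m)) (a div m) \<bullet> v))"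
  proof (rule sum.cong)
    fix a assume "a \<in> {..<l * m}"
    then have a: "a < l * m" by simp
    have sgs: "sg a = sigma (xs ! (a mod m)) * sigma (xs ! (a mod m))" by (simp add: sg_def power2_eq_square)
    show "(G *\<^sub>v u) $ a * ((G *\<^sub>v v) $ a / sg a) =
      (hv n l A C sigma (xs ! (a mod m)) (a div m) \<bullet> u) * (hv n l A C sigma (xs ! (a mod m)) (a div m) \<bullet> v)"
      unfolding hv_sp[OF u] hv_sp[OF v] Gu[OF a u] Gu[OF a v] sgs Ph_def by simp
  qed simp
  also have "\<dots> = (\<Sum>t<l. \<Sum>i<m. (hv n l A C sigma (xs ! i) t \<bullet> u) * (hv n l A C sigma (xs ! i) t \<bullet> v))"
    by (rule sum_div_mod[of "\<lambda>t i. (hv n l A C sigma (xs ! i) t \<bullet> u) * (hv n l A C sigma (xs ! i) t \<bullet> v)"])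
  also have "\<dots> = (\<Sum>t<l. \<Sum>j\<in>S. (hv n l A C sigma j t \<bullet> u) * (hv n l A C sigma j t \<bullet> v))"
  proof (rule sum.cong[OF refl])
    fix t
    show "(\<Sum>i<m. (hv n l A C sigma (xs ! i) t \<bullet> u) * (hv n l A C sigma (xs ! i) t \<bullet> v)) =
        (\<Sum>j\<in>S. (hv n l A C sigma j t \<bullet> u) * (hv n l A C sigma j t \<bullet> v))"
      unfolding xs_def m_def
      by (rule sum_sorted_nth_x[OF fin, of "\<lambda>j. (hv n l A C sigma j t \<bullet> u) * (hv n l A C sigma j t \<bullet> v)"])
  qed
  also have "\<dots> = (\<Sum>j\<in>S. \<Sum>t<l. (hv n l A C sigma j t \<bullet> u) * (hv n l A C sigma j t \<bullet> v))"
    by (rule sum.swap)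
  finally show ?thesis using Uc by simp
qed

lemma posdef_psd:
  fixes A :: "real mat"
  assumes A: "A \<in> carrier_mat N N" and pd: "posdef N A" and x: "x \<in> carrier_vec N"
  shows "0 \<le> x \<bullet> (A *\<^sub>v x)"
proof (cases "x = 0\<^sub>v N")
  case True
  have "0\<^sub>v N \<bullet> (A *\<^sub>v 0\<^sub>v N) = 0" by (rule scalar_prod_left_zero) (use A in simp)
  then show ?thesis using True by simp
next
  case False
  then show ?thesis using pd x unfolding posdef_def by (auto intro: less_imp_le)
qed

locale sysloc =
  fixes n p l :: nat and A C X0 W :: "real mat" and sigma :: "nat \<Rightarrow> real"
  assumes n0: "0 < n" and p0: "0 < p" and l0: "0 < l"
    and Cc: "C \<in> carrier_mat p n"
    and X0: "sym_posdef n X0" and W: "sym_posdef n W"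
    and sig: "\<forall>i<p. sigma i > 0"
begin

abbreviation "NN \<equiv> n * l"
abbreviation "LL \<equiv> L_mat n l X0 W"
abbreviation "UU S \<equiv> U_mat n p l A C sigma S"
abbreviation "MM S \<equiv> LL + UU S"
abbreviation "ff \<equiv> f_fun n p l A C X0 W sigma"
abbreviation "JJ \<equiv> J_fun n p l A C X0 W sigma"
abbreviation "hh j t \<equiv> hv n l A C sigma j t"

definition beta :: "nat \<Rightarrow> real vec \<Rightarrow> real vec \<Rightarrow> real" where
  "beta j x y = (\<Sum>t<l. (hh j t \<bullet> x) * (hh j t \<bullet> y))"

lemma NN0: "0 < NN" using n0 l0 by simp

lemma beta_nn: "0 \<le> beta j x x"
  unfolding beta_def by (intro sum_nonneg) auto

lemma beta_sym: "beta j x y = beta j y x"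
  unfolding beta_def by (simp add: mult.commute)

lemma L_facts: "LL \<in> carrier_mat NN NN" "transpose_mat LL = LL" "posdef NN LL"
  using L_props[OF X0 W, of l] by auto

lemma U_facts:
  assumes S: "S \<subseteq> {..<p}"
  shows "UU S \<in> carrier_mat NN NN"
    and "\<And>u v. u \<in> carrier_vec NN \<Longrightarrow> v \<in> carrier_vec NN \<Longrightarrow>
           u \<bullet> (UU S *\<^sub>v v) = (\<Sum>j\<in>S. beta j u v)"
proof -
  show "UU S \<in> carrier_mat NN NN"
    using U_bil[OF n0 Cc sig S, where u="0\<^sub>v NN" and v="0\<^sub>v NN" and A=A] by auto
  fix u v :: "real vec" assume "u \<in> carrier_vec NN" "v \<in> carrier_vec NN"
  then show "u \<bullet> (UU S *\<^sub>v v) = (\<Sum>j\<in>S. beta j u v)"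
    using U_bil[OF n0 Cc sig S, where u=u and v=v and A=A] by (simp add: beta_def)
qed

lemma entry_unit:
  fixes P :: "real mat"
  assumes P: "P \<in> carrier_mat N N" and r: "r < N" and c: "c < N"
  shows "P $$ (r, c) = unit_vec N r \<bullet> (P *\<^sub>v unit_vec N c)"
proof -
  have "unit_vec N r \<bullet> (P *\<^sub>v unit_vec N c) = (P *\<^sub>v unit_vec N c) $ r"
    using r P by (simp add: scalar_prod_left_unit)
  also have "\<dots> = row P r \<bullet> unit_vec N c" using r P by simp
  also have "\<dots> = P $$ (r, c)" using r c P by (simp add: scalar_prod_right_unit)
  finally show ?thesis by simp
qed

lemma U_sym:
  assumes S: "S \<subseteq> {..<p}"
  shows "transpose_mat (UU S) = UU S"
proof (rule eq_matI)
  note Uc = U_facts(1)[OF S]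
  fix r c assume "r < dim_row (UU S)" "c < dim_col (UU S)"
  then have r: "r < NN" and c: "c < NN" using Uc by auto
  have "transpose_mat (UU S) $$ (r, c) = UU S $$ (c, r)" using r c Uc by simp
  also have "\<dots> = (\<Sum>j\<in>S. beta j (unit_vec NN c) (unit_vec NN r))"
    using entry_unit[OF Uc c r] U_facts(2)[OF S] by simp
  also have "\<dots> = (\<Sum>j\<in>S. beta j (unit_vec NN r) (unit_vec NN c))" by (simp add: beta_sym)
  also have "\<dots> = UU S $$ (r, c)"
    using entry_unit[OF Uc r c] U_facts(2)[OF S] by simp
  finally show "transpose_mat (UU S) $$ (r, c) = UU S $$ (r, c)" .
qed (use U_facts(1)[OF S] in auto)

lemma M_facts:
  assumes S: "S \<subseteq> {..<p}"
  shows "MM S \<in> carrier_mat NN NN" "transpose_mat (MM S) = MM S" "posdef NN (MM S)"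
    and "\<And>u v. u \<in> carrier_vec NN \<Longrightarrow> v \<in> carrier_vec NN \<Longrightarrow>
           u \<bullet> (MM S *\<^sub>v v) = u \<bullet> (LL *\<^sub>v v) + (\<Sum>j\<in>S. beta j u v)"
proof -
  note Lc = L_facts(1) and Uc = U_facts(1)[OF S]
  show Mc: "MM S \<in> carrier_mat NN NN" using Lc Uc by simp
  show "transpose_mat (MM S) = MM S" using Lc Uc L_facts(2) U_sym[OF S] by (simp add: transpose_add)
  show bil: "\<And>u v. u \<in> carrier_vec NN \<Longrightarrow> v \<in> carrier_vec NN \<Longrightarrow>
           u \<bullet> (MM S *\<^sub>v v) = u \<bullet> (LL *\<^sub>v v) + (\<Sum>j\<in>S. beta j u v)"
    using bil_add_mat[OF Lc Uc] U_facts(2)[OF S] by simp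
  show "posdef NN (MM S)" unfolding posdef_def
  proof (intro ballI impI)
    fix x :: "real vec" assume x: "x \<in> carrier_vec NN" and nz: "x \<noteq> 0\<^sub>v NN"
    have "0 < x \<bullet> (LL *\<^sub>v x)" using L_facts(3) x nz unfolding posdef_def by auto
    moreover have "0 \<le> (\<Sum>j\<in>S. beta j x x)" by (intro sum_nonneg beta_nn)
    ultimately show "0 < x \<bullet> (MM S *\<^sub>v x)" using bil[OF x x] by simp
  qed
qed

lemma Minv:
  assumes S: "S \<subseteq> {..<p}"
  shows "minv (MM S) \<in> carrier_mat NN NN \<and> MM S * minv (MM S) = 1\<^sub>m NN \<and> minv (MM S) * MM S = 1\<^sub>m NN"
  by (rule minv_props[OF M_facts(1)[OF S] M_facts(3)[OF S]])

lemma J_rep: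
  assumes S: "S \<subseteq> {..<p}"
  shows "JJ S = (\<Sum>i<NN. unit_vec NN i \<bullet> (minv (MM S) *\<^sub>v unit_vec NN i))"
  unfolding J_fun_def using trace_unit[of "minv (MM S)" NN] Minv[OF S] by simp

lemma inv_apply:
  assumes S: "S \<subseteq> {..<p}" and e: "e \<in> carrier_vec NN"
  shows "MM S *\<^sub>v (minv (MM S) *\<^sub>v e) = e" "minv (MM S) *\<^sub>v e \<in> carrier_vec NN"
proof -
  have c: "minv (MM S) \<in> carrier_mat NN NN" "MM S * minv (MM S) = 1\<^sub>m NN" using Minv[OF S] by auto
  have "(MM S * minv (MM S)) *\<^sub>v e = MM S *\<^sub>v (minv (MM S) *\<^sub>v e)"
    by (rule assoc_mult_mat_vec[OF M_facts(1)[OF S] c(1) e])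
  moreover have "(MM S * minv (MM S)) *\<^sub>v e = e" using c e by simp
  ultimately show "MM S *\<^sub>v (minv (MM S) *\<^sub>v e) = e" by simp
  show "minv (MM S) *\<^sub>v e \<in> carrier_vec NN" using c e by simp
qed

lemma diff_main:
  assumes S: "S \<subseteq> T" and T: "T \<subseteq> {..<p}"
  defines "y \<equiv> \<lambda>i. minv (MM S) *\<^sub>v unit_vec NN i"
  defines "z \<equiv> \<lambda>i. minv (MM T) *\<^sub>v unit_vec NN i"
  shows "JJ S - JJ T \<le> (\<Sum>i<NN. \<Sum>j\<in>T - S. beta j (y i) (y i))"
    and "(\<Sum>i<NN. \<Sum>j\<in>T - S. beta j (z i) (z i)) \<le> JJ S - JJ T"
    and "\<And>c. 0 \<le> c \<Longrightarrow> c \<le> 1 \<Longrightarrow>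
          (\<And>v. v \<in> carrier_vec NN \<Longrightarrow> c * (v \<bullet> (MM T *\<^sub>v v)) \<le> v \<bullet> (MM S *\<^sub>v v)) \<Longrightarrow>
          c * (\<Sum>i<NN. \<Sum>j\<in>T - S. beta j (y i) (y i)) \<le> JJ S - JJ T"
proof -
  have SI: "S \<subseteq> {..<p}" using S T by auto
  have finT: "finite T" by (rule finite_subset[OF T]) simp
  define B where "B = UU T - UU S"
  note McS = M_facts[OF SI] and McT = M_facts[OF T]
  have Bc: "B \<in> carrier_mat NN NN" using U_facts(1)[OF SI] by (simp add: B_def minus_carrier_mat)
  have Bs: "transpose_mat B = B"
    using U_facts(1)[OF T] U_facts(1)[OF SI] U_sym[OF T] U_sym[OF SI] by (simp add: B_def transpose_minus)
  have Bbil: "u \<bullet> (B *\<^sub>v v) = (\<Sum>j\<in>T - S. beta j u v)" if u: "u \<in> carrier_vec NN" and v: "v \<in> carrier_vec NN" for u v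
  proof -
    have "B *\<^sub>v v = UU T *\<^sub>v v - UU S *\<^sub>v v" unfolding B_def
      by (rule minus_mult_distrib_mat_vec[OF U_facts(1)[OF T] U_facts(1)[OF SI] v])
    then have "u \<bullet> (B *\<^sub>v v) = u \<bullet> (UU T *\<^sub>v v) - u \<bullet> (UU S *\<^sub>v v)"
      using u v U_facts(1)[OF T] U_facts(1)[OF SI] by (simp add: scalar_prod_minus_distrib[of _ NN])
    also have "\<dots> = (\<Sum>j\<in>T. beta j u v) - (\<Sum>j\<in>S. beta j u v)"
      using U_facts(2)[OF T u v] U_facts(2)[OF SI u v] by simp
    also have "(\<Sum>j\<in>T. beta j u v) = (\<Sum>j\<in>T - S. beta j u v) + (\<Sum>j\<in>S. beta j u v)"
      by (rule sum.subset_diff[OF S finT])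
    finally show ?thesis by simp
  qed
  have Bpsd: "0 \<le> x \<bullet> (B *\<^sub>v x)" if "x \<in> carrier_vec NN" for x
    using Bbil[OF that that] by (simp add: sum_nonneg beta_nn)
  have Mpsd: "0 \<le> x \<bullet> (MM S *\<^sub>v x)" if "x \<in> carrier_vec NN" for x
    by (rule posdef_psd[OF McS(1) McS(3) that])
  have MB: "MM S + B = MM T"
  proof (rule eq_matI)
    fix i j assume "i < dim_row (MM T)" "j < dim_col (MM T)"
    then have i: "i < NN" and j: "j < NN" using McT(1) by auto
    show "(MM S + B) $$ (i, j) = MM T $$ (i, j)"
      using i j L_facts(1) U_facts(1)[OF T] U_facts(1)[OF SI] by (simp add: B_def)
  qed (use McT(1) McS(1) Bc in auto)
  have yc: "y i \<in> carrier_vec NN" "MM S *\<^sub>v y i = unit_vec NN i" for i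
    using inv_apply[OF SI, of "unit_vec NN i"] by (auto simp: y_def)
  have zc: "z i \<in> carrier_vec NN" "(MM S + B) *\<^sub>v z i = unit_vec NN i" for i
    using inv_apply[OF T, of "unit_vec NN i"] MB by (auto simp: z_def)
  have ec: "unit_vec NN i \<in> carrier_vec NN" for i by simp
  note ci = core_ineqs[OF McS(1) Bc McS(2) Bs Mpsd Bpsd ec yc(1) zc(1) yc(2) zc(2)]
  have JD: "JJ S - JJ T = (\<Sum>i<NN. unit_vec NN i \<bullet> y i - unit_vec NN i \<bullet> z i)"
    using J_rep[OF SI] J_rep[OF T] by (simp add: y_def z_def sum_subtractf)
  show "JJ S - JJ T \<le> (\<Sum>i<NN. \<Sum>j\<in>T - S. beta j (y i) (y i))"
    unfolding JD
  proof (intro sum_mono)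
    fix i
    have "unit_vec NN i \<bullet> y i - unit_vec NN i \<bullet> z i \<le> y i \<bullet> (B *\<^sub>v y i)" by (rule ci(1))
    also have "\<dots> = (\<Sum>j\<in>T - S. beta j (y i) (y i))" by (rule Bbil[OF yc(1) yc(1)])
    finally show "unit_vec NN i \<bullet> y i - unit_vec NN i \<bullet> z i \<le> (\<Sum>j\<in>T - S. beta j (y i) (y i))" .
  qed
  show "(\<Sum>i<NN. \<Sum>j\<in>T - S. beta j (z i) (z i)) \<le> JJ S - JJ T"
    unfolding JD
  proof (intro sum_mono)
    fix i
    have "(\<Sum>j\<in>T - S. beta j (z i) (z i)) = z i \<bullet> (B *\<^sub>v z i)" by (rule Bbil[OF zc(1) zc(1), symmetric])
    also have "\<dots> \<le> unit_vec NN i \<bullet> y i - unit_vec NN i \<bullet> z i" by (rule ci(2))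
    finally show "(\<Sum>j\<in>T - S. beta j (z i) (z i)) \<le> unit_vec NN i \<bullet> y i - unit_vec NN i \<bullet> z i" .
  qed
  fix c :: real
  assume c0: "0 \<le> c" and c1: "c \<le> 1"
    and cond: "\<And>v. v \<in> carrier_vec NN \<Longrightarrow> c * (v \<bullet> (MM T *\<^sub>v v)) \<le> v \<bullet> (MM S *\<^sub>v v)"
  have cond': "c * (v \<bullet> ((MM S + B) *\<^sub>v v)) \<le> v \<bullet> (MM S *\<^sub>v v)" if "v \<in> carrier_vec NN" for v
    using cond[OF that] MB by simp
  have "c * (\<Sum>i<NN. \<Sum>j\<in>T - S. beta j (y i) (y i)) = (\<Sum>i<NN. c * (y i \<bullet> (B *\<^sub>v y i)))"
    using Bbil yc(1) by (simp add: sum_distrib_left)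
  also have "\<dots> \<le> (\<Sum>i<NN. unit_vec NN i \<bullet> y i - unit_vec NN i \<bullet> z i)"
    by (intro sum_mono, rule ci(3)[OF _ _ c0 c1 cond']) auto
  finally show "c * (\<Sum>i<NN. \<Sum>j\<in>T - S. beta j (y i) (y i)) \<le> JJ S - JJ T" unfolding JD .
qed

lemma marg_ff: "marg ff X S = JJ S - JJ (S \<union> X)"
  by (simp add: marg_def f_fun_def)

lemma ff_empty: "ff {} = 0" by (simp add: f_fun_def)

lemma ff_mono:
  assumes S: "S \<subseteq> {..<p}" and X: "X \<subseteq> {..<p}"
  shows "ff S \<le> ff (S \<union> X)"
proof -
  have T: "S \<union> X \<subseteq> {..<p}" using S X by auto
  have "0 \<le> (\<Sum>i<NN. \<Sum>j\<in>(S \<union> X) - S. beta j (minv (MM (S \<union> X)) *\<^sub>v unit_vec NN i) (minv (MM (S \<union> X)) *\<^sub>v unit_vec NN i))"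
    by (intro sum_nonneg beta_nn)
  also have "\<dots> \<le> JJ S - JJ (S \<union> X)" by (rule diff_main(2)[OF _ T]) auto
  finally show ?thesis by (simp add: f_fun_def)
qed

definition lmin where "lmin = lambda_min LL"
definition lmax where "lmax = lambda_max (MM {..<p})"
definition cc where "cc = lmin / lmax"

lemma lmin_pos: "0 < lmin"
  using lmin_props[OF L_facts(1) L_facts(2) NN0] eig_pos[OF L_facts(1) L_facts(3)] by (auto simp: lmin_def)

lemma lmax_pos: "0 < lmax"
proof -
  have I: "{..<p} \<subseteq> {..<p}" by simp
  show ?thesis using lmax_props[OF M_facts(1)[OF I] M_facts(2)[OF I] NN0] eig_pos[OF M_facts(1)[OF I] M_facts(3)[OF I]]
    by (auto simp: lmax_def)
qed

lemma M_lo: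
  assumes S: "S \<subseteq> {..<p}" and v: "v \<in> carrier_vec NN"
  shows "lmin * (v \<bullet> v) \<le> v \<bullet> (MM S *\<^sub>v v)"
proof -
  have "lmin * (v \<bullet> v) \<le> v \<bullet> (LL *\<^sub>v v)"
    using lmin_props[OF L_facts(1) L_facts(2) NN0] v by (auto simp: lmin_def)
  also have "\<dots> \<le> v \<bullet> (LL *\<^sub>v v) + (\<Sum>j\<in>S. beta j v v)" by (simp add: sum_nonneg beta_nn)
  also have "\<dots> = v \<bullet> (MM S *\<^sub>v v)" using M_facts(4)[OF S v v] by simp
  finally show ?thesis .
qed

lemma M_up:
  assumes S: "S \<subseteq> {..<p}" and v: "v \<in> carrier_vec NN"
  shows "v \<bullet> (MM S *\<^sub>v v) \<le> lmax * (v \<bullet> v)"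
proof -
  have I: "{..<p} \<subseteq> {..<p}" by simp
  have "v \<bullet> (MM S *\<^sub>v v) = v \<bullet> (LL *\<^sub>v v) + (\<Sum>j\<in>S. beta j v v)" using M_facts(4)[OF S v v] by simp
  also have "(\<Sum>j\<in>S. beta j v v) \<le> (\<Sum>j\<in>{..<p}. beta j v v)"
    by (rule sum_mono2) (use S beta_nn in auto)
  also have "v \<bullet> (LL *\<^sub>v v) + (\<Sum>j\<in>{..<p}. beta j v v) = v \<bullet> (MM {..<p} *\<^sub>v v)"
    using M_facts(4)[OF I v v] by simp
  also have "\<dots> \<le> lmax * (v \<bullet> v)"
    using lmax_props[OF M_facts(1)[OF I] M_facts(2)[OF I] NN0] v by (auto simp: lmax_def)
  finally show ?thesis by simp
qed

lemma cc_range: "0 \<le> cc" "cc \<le> 1"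
proof -
  show "0 \<le> cc" using lmin_pos lmax_pos by (simp add: cc_def)
  have I: "{..<p} \<subseteq> {..<p}" by simp
  define v :: "real vec" where "v = unit_vec NN 0"
  have v: "v \<in> carrier_vec NN" by (simp add: v_def)
  have vv: "v \<bullet> v = 1" using NN0 by (simp add: v_def)
  have "lmin \<le> lmax" using M_lo[OF I v] M_up[OF I v] vv by simp
  then show "cc \<le> 1" using lmax_pos by (simp add: cc_def)
qed

lemma cc_cond:
  assumes S: "S \<subseteq> {..<p}" and T: "T \<subseteq> {..<p}" and v: "v \<in> carrier_vec NN"
  shows "cc * (v \<bullet> (MM T *\<^sub>v v)) \<le> v \<bullet> (MM S *\<^sub>v v)"
proof -
  have "cc * (v \<bullet> (MM T *\<^sub>v v)) \<le> cc * (lmax * (v \<bullet> v))"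
    using M_up[OF T v] cc_range(1) by (rule mult_left_mono)
  also have "\<dots> = lmin * (v \<bullet> v)" using lmax_pos by (simp add: cc_def)
  also have "\<dots> \<le> v \<bullet> (MM S *\<^sub>v v)" by (rule M_lo[OF S v])
  finally show ?thesis .
qed

lemma gprop_cc: "gprop ff {..<p} cc"
  unfolding gprop_def
proof (intro allI impI)
  fix Om S assume Om: "Om \<subseteq> {..<p}" and S: "S \<subseteq> {..<p}"
  define y where "y i = minv (MM S) *\<^sub>v unit_vec NN i" for i
  have single: "cc * (\<Sum>i<NN. beta w (y i) (y i)) \<le> marg ff {w} S" if w: "w \<in> Om - S" for w
  proof -
    have T: "S \<union> {w} \<subseteq> {..<p}" using S Om w by auto
    have d: "(S \<union> {w}) - S = {w}" using w by auto
    have "cc * (\<Sum>i<NN. \<Sum>j\<in>(S \<union> {w}) - S. beta j (y i) (y i)) \<le> JJ S - JJ (S \<union> {w})"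
      unfolding y_def by (rule diff_main(3)[OF _ T cc_range(1) cc_range(2) cc_cond[OF S T]]) auto
    then show ?thesis using d by (simp add: marg_ff)
  qed
  have "cc * marg ff Om S \<le> cc * (\<Sum>i<NN. \<Sum>j\<in>(S \<union> Om) - S. beta j (y i) (y i))"
  proof -
    have T: "S \<union> Om \<subseteq> {..<p}" using S Om by auto
    have "marg ff Om S \<le> (\<Sum>i<NN. \<Sum>j\<in>(S \<union> Om) - S. beta j (y i) (y i))"
      unfolding marg_ff y_def by (rule diff_main(1)[OF _ T]) auto
    then show ?thesis using cc_range(1) by (rule mult_left_mono)
  qed
  also have "(S \<union> Om) - S = Om - S" by auto
  also have "cc * (\<Sum>i<NN. \<Sum>j\<in>Om - S. beta j (y i) (y i)) = (\<Sum>w\<in>Om - S. cc * (\<Sum>i<NN. beta w (y i) (y i)))"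
    by (simp add: sum_distrib_left sum.swap[of _ "{..<NN}"])
  also have "\<dots> \<le> (\<Sum>w\<in>Om - S. marg ff {w} S)" by (rule sum_mono) (rule single)
  finally show "cc * marg ff Om S \<le> (\<Sum>w\<in>Om - S. marg ff {w} S)" .
qed

lemma colsum:
  fixes Q :: "real mat" and h :: "real vec"
  assumes Q: "Q \<in> carrier_mat N N" and h: "h \<in> carrier_vec N"
  shows "(\<Sum>i<N. (h \<bullet> (Q *\<^sub>v unit_vec N i))^2) = (transpose_mat Q *\<^sub>v h) \<bullet> (transpose_mat Q *\<^sub>v h)"
proof -
  have wc: "transpose_mat Q *\<^sub>v h \<in> carrier_vec N" using Q h by simp
  have "h \<bullet> (Q *\<^sub>v unit_vec N i) = (transpose_mat Q *\<^sub>v h) $ i" if "i < N" for i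
  proof -
    have "h \<bullet> (Q *\<^sub>v unit_vec N i) = (transpose_mat Q *\<^sub>v h) \<bullet> unit_vec N i"
      using transpose_vec_mult_scalar[OF Q _ h, of "unit_vec N i"] by simp
    also have "\<dots> = (transpose_mat Q *\<^sub>v h) $ i" using that wc by (simp add: scalar_prod_right_unit)
    finally show ?thesis .
  qed
  then have "(\<Sum>i<N. (h \<bullet> (Q *\<^sub>v unit_vec N i))^2) = (\<Sum>i<N. (transpose_mat Q *\<^sub>v h) $ i * (transpose_mat Q *\<^sub>v h) $ i)"
    by (intro sum.cong) (auto simp: power2_eq_square)
  also have "\<dots> = (transpose_mat Q *\<^sub>v h) \<bullet> (transpose_mat Q *\<^sub>v h)" using sp_sum[OF wc wc] by simp
  finally show ?thesis .
qed

lemma inv_T_apply: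
  fixes M Q :: "real mat" and h :: "real vec"
  assumes M: "M \<in> carrier_mat N N" and Ms: "transpose_mat M = M" and Q: "Q \<in> carrier_mat N N"
    and QM: "Q * M = 1\<^sub>m N" and h: "h \<in> carrier_vec N"
  shows "M *\<^sub>v (transpose_mat Q *\<^sub>v h) = h"
proof -
  have QT: "transpose_mat Q \<in> carrier_mat N N" using Q by simp
  have "M * transpose_mat Q = transpose_mat M * transpose_mat Q" using Ms by simp
  also have "\<dots> = transpose_mat (Q * M)" using Q M by (simp add: transpose_mult)
  also have "\<dots> = 1\<^sub>m N" using QM by simp
  finally have e: "M * transpose_mat Q = 1\<^sub>m N" .
  have "(M * transpose_mat Q) *\<^sub>v h = M *\<^sub>v (transpose_mat Q *\<^sub>v h)" by (rule assoc_mult_mat_vec[OF M QT h])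
  then show ?thesis using e h by simp
qed

lemma beta_colsum:
  assumes S: "S \<subseteq> {..<p}"
  shows "(\<Sum>i<NN. beta j (minv (MM S) *\<^sub>v unit_vec NN i) (minv (MM S) *\<^sub>v unit_vec NN i)) =
    (\<Sum>t<l. (transpose_mat (minv (MM S)) *\<^sub>v hh j t) \<bullet> (transpose_mat (minv (MM S)) *\<^sub>v hh j t))"
proof -
  have Qc: "minv (MM S) \<in> carrier_mat NN NN" using Minv[OF S] by auto
  have "(\<Sum>i<NN. beta j (minv (MM S) *\<^sub>v unit_vec NN i) (minv (MM S) *\<^sub>v unit_vec NN i)) =
      (\<Sum>t<l. \<Sum>i<NN. (hh j t \<bullet> (minv (MM S) *\<^sub>v unit_vec NN i))^2)"
    unfolding beta_def by (subst sum.swap) (simp add: power2_eq_square)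
  also have "\<dots> = (\<Sum>t<l. (transpose_mat (minv (MM S)) *\<^sub>v hh j t) \<bullet> (transpose_mat (minv (MM S)) *\<^sub>v hh j t))"
    by (rule sum.cong[OF refl]) (rule colsum[OF Qc hv_carrier])
  finally show ?thesis .
qed

lemma vec_bound:
  assumes S0: "S0 \<subseteq> {..<p}" and S2: "S2 \<subseteq> {..<p}" and h: "h \<in> carrier_vec NN"
  shows "cc^2 * ((transpose_mat (minv (MM S0)) *\<^sub>v h) \<bullet> (transpose_mat (minv (MM S0)) *\<^sub>v h))
     \<le> (transpose_mat (minv (MM S2)) *\<^sub>v h) \<bullet> (transpose_mat (minv (MM S2)) *\<^sub>v h)"
proof -
  define v where "v = transpose_mat (minv (MM S0)) *\<^sub>v h"
  define w where "w = transpose_mat (minv (MM S2)) *\<^sub>v h"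
  have P0: "minv (MM S0) \<in> carrier_mat NN NN" "minv (MM S0) * MM S0 = 1\<^sub>m NN" using Minv[OF S0] by auto
  have P2: "minv (MM S2) \<in> carrier_mat NN NN" "minv (MM S2) * MM S2 = 1\<^sub>m NN" using Minv[OF S2] by auto
  have vc: "v \<in> carrier_vec NN" using P0 h by (simp add: v_def)
  have wc: "w \<in> carrier_vec NN" using P2 h by (simp add: w_def)
  have Mv: "MM S0 *\<^sub>v v = h" unfolding v_def by (rule inv_T_apply[OF M_facts(1)[OF S0] M_facts(2)[OF S0] P0 h])
  have Mw: "MM S2 *\<^sub>v w = h" unfolding w_def by (rule inv_T_apply[OF M_facts(1)[OF S2] M_facts(2)[OF S2] P2 h])
  have ub: "lmin^2 * (v \<bullet> v) \<le> h \<bullet> h"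
    by (rule norm_ub[OF M_facts(1)[OF S0] M_lo[OF S0] lmin_pos vc Mv])
  have lb: "h \<bullet> h \<le> lmax^2 * (w \<bullet> w)"
    by (rule norm_lb[OF M_facts(1)[OF S2] M_facts(2)[OF S2] M_up[OF S2]
          posdef_psd[OF M_facts(1)[OF S2] M_facts(3)[OF S2]] lmax_pos wc Mw])
  have "cc^2 * (v \<bullet> v) = lmin^2 * (v \<bullet> v) / lmax^2" by (simp add: cc_def power_divide)
  also have "\<dots> \<le> h \<bullet> h / lmax^2" using ub lmax_pos by (simp add: divide_right_mono)
  also have "\<dots> \<le> w \<bullet> w" using lb lmax_pos by (simp add: divide_le_eq mult.commute)
  finally show ?thesis by (simp add: v_def w_def)
qed

lemma aprop_cc: "aprop ff {..<p} (1 - cc^2)"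
  unfolding aprop_def
proof (intro allI impI)
  fix Om S j assume Om: "Om \<subseteq> {..<p}" and S: "S \<subseteq> {..<p}" and j: "j \<in> S - Om"
  define T0 where "T0 = S - {j}"
  define T1 where "T1 = T0 \<union> Om"
  define T2 where "T2 = T1 \<union> {j}"
  have T0: "T0 \<subseteq> {..<p}" using S by (auto simp: T0_def)
  have T1: "T1 \<subseteq> {..<p}" using S Om by (auto simp: T1_def T0_def)
  have T2: "T2 \<subseteq> {..<p}" using S Om j by (auto simp: T2_def T1_def T0_def)
  have T0j: "T0 \<union> {j} \<subseteq> {..<p}" using S j by (auto simp: T0_def)
  have d1: "(T0 \<union> {j}) - T0 = {j}" by (auto simp: T0_def)
  have d2: "T2 - T1 = {j}" using j by (auto simp: T2_def T1_def T0_def)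
  have m1: "marg ff {j} T0 \<le> (\<Sum>i<NN. beta j (minv (MM T0) *\<^sub>v unit_vec NN i) (minv (MM T0) *\<^sub>v unit_vec NN i))"
  proof -
    have "JJ T0 - JJ (T0 \<union> {j}) \<le> (\<Sum>i<NN. \<Sum>k\<in>(T0 \<union> {j}) - T0. beta k (minv (MM T0) *\<^sub>v unit_vec NN i) (minv (MM T0) *\<^sub>v unit_vec NN i))"
      by (rule diff_main(1)[OF _ T0j]) auto
    then show ?thesis unfolding d1 marg_ff by simp
  qed
  have m2: "(\<Sum>i<NN. beta j (minv (MM T2) *\<^sub>v unit_vec NN i) (minv (MM T2) *\<^sub>v unit_vec NN i)) \<le> marg ff {j} T1"
  proof -
    have "(\<Sum>i<NN. \<Sum>k\<in>T2 - T1. beta k (minv (MM T2) *\<^sub>v unit_vec NN i) (minv (MM T2) *\<^sub>v unit_vec NN i)) \<le> JJ T1 - JJ T2"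
      by (rule diff_main(2)[OF _ T2]) (auto simp: T2_def)
    then show ?thesis unfolding d2 marg_ff by (simp add: T2_def)
  qed
  have m3: "cc^2 * (\<Sum>i<NN. beta j (minv (MM T0) *\<^sub>v unit_vec NN i) (minv (MM T0) *\<^sub>v unit_vec NN i))
      \<le> (\<Sum>i<NN. beta j (minv (MM T2) *\<^sub>v unit_vec NN i) (minv (MM T2) *\<^sub>v unit_vec NN i))"
    unfolding beta_colsum[OF T0] beta_colsum[OF T2] sum_distrib_left
    by (rule sum_mono) (rule vec_bound[OF T0 T2 hv_carrier])
  have "(1 - (1 - cc^2)) * marg ff {j} T0 = cc^2 * marg ff {j} T0" by simp
  also have "\<dots> \<le> cc^2 * (\<Sum>i<NN. beta j (minv (MM T0) *\<^sub>v unit_vec NN i) (minv (MM T0) *\<^sub>v unit_vec NN i))"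
    using m1 by (rule mult_left_mono) simp
  also have "\<dots> \<le> marg ff {j} T1" using m3 m2 by linarith
  finally show "(1 - (1 - cc^2)) * marg ff {j} (S - {j}) \<le> marg ff {j} ((S - {j}) \<union> Om)"
    by (simp add: T0_def T1_def)
qed

end

theorem corollary1:
  fixes n p l s :: nat and A C X0 W :: "real mat" and sigma :: "nat \<Rightarrow> real"
    and Sopt Sg :: "nat set"
  defines "f \<equiv> f_fun n p l A C X0 W sigma"
  assumes "0 < n" and "0 < p" and "0 < l"
    and "A \<in> carrier_mat n n" and "C \<in> carrier_mat p n"
    and "sym_posdef n X0" and "sym_posdef n W"
    and "\<forall>i<p. sigma i > 0"
    and "0 < s" and "s \<le> p"
    and "Sopt \<subseteq> {..<p}" and "card Sopt \<le> s"
    and "\<forall>S. S \<subseteq> {..<p} \<longrightarrow> card S \<le> s \<longrightarrow> f S \<le> f Sopt"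
    and "greedy_output f {..<p} s Sg"
  shows "f Sg \<ge> bound_factor (curvature f {..<p}) (subm_ratio f {..<p}) * f Sopt
    \<and> bound_factor (curvature f {..<p}) (subm_ratio f {..<p}) * f Sopt
      \<ge> bound_factor (alpha_ub n p l A C X0 W sigma) (gamma_lb n p l A C X0 W sigma) * f Sopt"
proof -
  interpret sysloc n p l A C X0 W sigma
    using assms by unfold_locales auto
  have fE: "f = ff" by (simp add: f_def)
  define I where "I = {..<p :: nat}"
  have mono: "\<And>S X. S \<subseteq> I \<Longrightarrow> X \<subseteq> I \<Longrightarrow> f S \<le> f (S \<union> X)"
    unfolding fE I_def by (rule ff_mono)
  have fin: "finite I" by (simp add: I_def)
  define sr where "sr = subm_ratio f I"
  define cu where "cu = curvature f I"
  have srp: "sr \<in> {0..1}" "gprop f I sr" "\<And>g. g \<in> {0..1} \<Longrightarrow> gprop f I g \<Longrightarrow> g \<le> sr"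
    using subm_ratio_props[of I f, OF mono] unfolding sr_def by auto
  have cup: "cu \<in> {0..1}" "aprop f I cu" "\<And>a. a \<in> {0..1} \<Longrightarrow> aprop f I a \<Longrightarrow> cu \<le> a"
    using curvature_props[of I f, OF mono] unfolding cu_def by auto
  have c01: "0 \<le> cc" "cc \<le> 1" by (rule cc_range)+
  have csq: "0 \<le> cc^2" "cc^2 \<le> 1" using c01 by (auto simp: power_le_one)
  have ccsr: "cc \<le> sr" using srp(3)[of cc] c01 gprop_cc by (simp add: fE I_def)
  have cuub: "cu \<le> 1 - cc^2" using cup(3)[of "1 - cc^2"] csq aprop_cc by (simp add: fE I_def)
  have f0: "f {} = 0" by (simp add: fE ff_empty)
  have SoptI: "Sopt \<subseteq> I" using assms by (simp add: I_def)
  have gr: "greedy_output f I s Sg" using assms by (simp add: I_def)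
  have main: "bound_factor cu sr * f Sopt \<le> f Sg"
    by (rule greedy_bound[OF fin f0 mono _ _ _ _ srp(2) cup(2) SoptI _ _ gr])
       (use srp(1) cup(1) assms in auto)
  have fO: "0 \<le> f Sopt" using mono[of "{}" Sopt] SoptI f0 by simp
  have gl: "gamma_lb n p l A C X0 W sigma = cc" by (simp add: gamma_lb_def cc_def lmin_def lmax_def)
  have al: "alpha_ub n p l A C X0 W sigma = 1 - cc^2"
    by (simp add: alpha_ub_def cc_def lmin_def lmax_def power_divide)
  have "bound_factor (1 - cc^2) cc \<le> bound_factor (1 - cc^2) sr"
    by (rule bf_mono_g) (use csq ccsr in auto)
  also have "\<dots> \<le> bound_factor cu sr"
    by (rule bf_anti_a) (use cup(1) cuub srp(1) in auto)
  finally have "bound_factor (1 - cc^2) cc * f Sopt \<le> bound_factor cu sr * f Sopt"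
    using fO by (rule mult_right_mono)
  then show ?thesis using main gl al by (simp add: sr_def cu_def I_def)
qed

end
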